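(* Let $\sigma$ be a sequence of $n$ integers and let $P_1,\dots,P_{\mathsf{lis}(\sigma)}$ be the piles produced by the complete execution of Patience Sorting on $\sigma$. Given the pile $P_{i}$ stored explicitly (for some $i\ge 0$) and an index $j$ with $i < j \le \mathsf{lis}(\sigma)$, the pile $P_{j}$ can be computed in $O(n \log n)$ time using $O((|P_{i}| + |P_{j}| + j-i) \log n)$ bits of working space.
   Context: Patience Sorting on $\sigma=\langle\sigma(1),\dots,\sigma(n)\rangle$ (repetitions allowed): piles are stacks, $\mathtt{top}(P)$ is the most recently pushed element. Initially $\ell=0$ and a dummy pile $P_0$ contains only $-\infty$. For $x=1,\dots,n$: if $\sigma(x)>\mathtt{top}(P_\ell)$, increment $\ell$ and push $\sigma(x)$ onto a new pile $P_\ell$; otherwise push $\sigma(x)$ onto $P_h$ for the smallest $h$ with $\sigma(x)\le \mathtt{top}(P_h)$. Each element is regarded together with its index in $\sigma$; computing a pile means producing its elements (with indices) in push order. The final number of piles equals $\mathsf{lis}(\sigma)$, the length of a longest increasing subsequence. Computational model: RAM with read-only input and space measured in bits of read-write working memory. *)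

theory Defs
  imports Complex_Main
begin

text \<open>The input sequence sigma is an int list; position x (1-based, as in the paper)
  holds sigma ! (x - 1).  A pile is represented by the list of indices of its elements
  in push order (the element with index x is sigma(x)); the top of a pile is its last entry.
  The piles P_1, P_2, ... are the entries 0, 1, ... of the pile list.  The dummy pile P_0
  (containing only minus infinity) is never pushed onto, so it is left implicit.\<close>

definition sval :: "int list \<Rightarrow> nat \<Rightarrow> int" where
  "sval \<sigma> x = \<sigma> ! (x - 1)"

definition ps_step :: "int list \<Rightarrow> nat list list \<Rightarrow> nat \<Rightarrow> nat list list" where
  "ps_step \<sigma> Ps x =
     (if Ps = [] \<or> sval \<sigma> x > sval \<sigma> (last (last Ps))
      then Ps @ [[x]]
      else (let h = (LEAST h. h < length Ps \<and> sval \<sigma> x \<le> sval \<sigma> (last (Ps ! h)))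
            in Ps[h := (Ps ! h) @ [x]]))"

definition piles :: "int list \<Rightarrow> nat list list" where
  "piles \<sigma> = foldl (ps_step \<sigma>) [] [1..<Suc (length \<sigma>)]"

text \<open>Pile P_j (j \<ge> 1) as list of indices in push order; P_0 is the dummy pile, whose only
  element is minus infinity, which carries no input index: we represent it by [].\<close>
definition pile :: "int list \<Rightarrow> nat \<Rightarrow> nat list" where
  "pile \<sigma> j = (if j = 0 then [] else piles \<sigma> ! (j - 1))"

text \<open>There are two read-only inputs: the sequence sigma (accessed by comparing
  the elements at two positions) and an auxiliary read-only array A holding the parameters
  i, j followed by the index list of the explicitly stored pile P_i.  Output is a write-only
  stream of numbers (here: the indices of the elements of the computed pile, in push order).\<close>

definition word_size :: "nat \<Rightarrow> nat" where
  "word_size n = nat \<lceil>log 2 (real n + 2)\<rceil> + 1"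

datatype instr =
    Const nat nat
  | Add nat nat nat
  | Sub nat nat nat
  | Mul nat nat nat
  | Div nat nat nat
  | Less nat nat nat
  | Load nat nat
  | Store nat nat
  | InLen nat
  | CmpIn nat nat nat
  | AuxLen nat
  | AuxRead nat nat
  | Jz nat nat
  | Jmp nat
  | Out nat
  | Halt

type_synonym config = "nat \<times> (nat \<Rightarrow> nat) \<times> nat list"

definition halted :: "instr list \<Rightarrow> config \<Rightarrow> bool" where
  "halted P c = (fst c \<ge> length P \<or> P ! fst c = Halt)"

fun exec :: "nat \<Rightarrow> int list \<Rightarrow> nat list \<Rightarrow> instr \<Rightarrow> config \<Rightarrow> config" where
  "exec w \<sigma> A (Const r k) (pc, M, out) = (Suc pc, M(r := k mod 2^w), out)"
| "exec w \<sigma> A (Add r a b) (pc, M, out) = (Suc pc, M(r := (M a + M b) mod 2^w), out)"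
| "exec w \<sigma> A (Sub r a b) (pc, M, out) = (Suc pc, M(r := M a - M b), out)"
| "exec w \<sigma> A (Mul r a b) (pc, M, out) = (Suc pc, M(r := (M a * M b) mod 2^w), out)"
| "exec w \<sigma> A (Div r a b) (pc, M, out) = (Suc pc, M(r := M a div M b), out)"
| "exec w \<sigma> A (Less r a b) (pc, M, out) = (Suc pc, M(r := (if M a < M b then 1 else 0)), out)"
| "exec w \<sigma> A (Load r a) (pc, M, out) = (Suc pc, M(r := M (M a)), out)"
| "exec w \<sigma> A (Store r a) (pc, M, out) = (Suc pc, M(M a := M r), out)"
| "exec w \<sigma> A (InLen r) (pc, M, out) = (Suc pc, M(r := length \<sigma> mod 2^w), out)"
| "exec w \<sigma> A (CmpIn r a b) (pc, M, out) =
     (Suc pc, M(r := (if 1 \<le> M a \<and> M a \<le> length \<sigma> \<and> 1 \<le> M b \<and> M b \<le> length \<sigma>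
                         \<and> sval \<sigma> (M a) \<le> sval \<sigma> (M b) then 1 else 0)), out)"
| "exec w \<sigma> A (AuxLen r) (pc, M, out) = (Suc pc, M(r := length A mod 2^w), out)"
| "exec w \<sigma> A (AuxRead r a) (pc, M, out) =
     (Suc pc, M(r := (if M a < length A then A ! (M a) mod 2^w else 0)), out)"
| "exec w \<sigma> A (Jz r t) (pc, M, out) = ((if M r = 0 then t else Suc pc), M, out)"
| "exec w \<sigma> A (Jmp t) (pc, M, out) = (t, M, out)"
| "exec w \<sigma> A (Out r) (pc, M, out) = (Suc pc, M, out @ [M r])"
| "exec w \<sigma> A Halt c = c"

definition step :: "instr list \<Rightarrow> int list \<Rightarrow> nat list \<Rightarrow> config \<Rightarrow> config" where
  "step P \<sigma> A c = (if halted P c then c else exec (word_size (length \<sigma>)) \<sigma> A (P ! fst c) c)"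

definition init_config :: config where
  "init_config = (0, (\<lambda>_. 0), [])"

definition conf :: "instr list \<Rightarrow> int list \<Rightarrow> nat list \<Rightarrow> nat \<Rightarrow> config" where
  "conf P \<sigma> A t = (step P \<sigma> A ^^ t) init_config"

definition space :: "nat \<Rightarrow> config \<Rightarrow> nat" where
  "space n c = word_size n * (LEAST k. \<forall>r\<ge>k. fst (snd c) r = 0)"

definition out_of :: "config \<Rightarrow> nat list" where
  "out_of c = snd (snd c)"

end

theory Submission
  imports Defs
begin


definition PS :: "int list \<Rightarrow> nat \<Rightarrow> nat list list" where
  "PS \<sigma> t = foldl (ps_step \<sigma>) [] [1..<Suc t]"

lemma PS_0[simp]: "PS \<sigma> 0 = []"
  by (simp add: PS_def)

lemma PS_Suc: "PS \<sigma> (Suc t) = ps_step \<sigma> (PS \<sigma> t) (Suc t)"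
  by (simp add: PS_def)

lemma piles_PS: "piles \<sigma> = PS \<sigma> (length \<sigma>)"
  by (simp add: PS_def piles_def)

definition posf :: "int list \<Rightarrow> nat list list \<Rightarrow> nat \<Rightarrow> nat" where
  "posf \<sigma> Ps x = length (takeWhile (\<lambda>p. sval \<sigma> (last p) < sval \<sigma> x) Ps)"

definition wfP :: "int list \<Rightarrow> nat list list \<Rightarrow> bool" where
  "wfP \<sigma> Ps \<longleftrightarrow> (\<forall>p\<in>set Ps. p \<noteq> []) \<and> sorted_wrt (\<lambda>p q. sval \<sigma> (last p) < sval \<sigma> (last q)) Ps"

lemma posf_le: "posf \<sigma> Ps x \<le> length Ps"
  by (simp add: posf_def length_takeWhile_le)

lemma posf_lt: "k < posf \<sigma> Ps x \<Longrightarrow> sval \<sigma> (last (Ps!k)) < sval \<sigma> x"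
proof -
  assume k: "k < posf \<sigma> Ps x"
  let ?T = "takeWhile (\<lambda>p. sval \<sigma> (last p) < sval \<sigma> x) Ps"
  have "?T ! k \<in> set ?T" using k unfolding posf_def by simp
  then have "sval \<sigma> (last (?T ! k)) < sval \<sigma> x" by (rule set_takeWhileD[THEN conjunct2])
  moreover have "?T ! k = Ps ! k" using k unfolding posf_def by (rule takeWhile_nth)
  ultimately show ?thesis by simp
qed

lemma posf_ge:
  assumes "wfP \<sigma> Ps" "posf \<sigma> Ps x \<le> k" "k < length Ps"
  shows "sval \<sigma> x \<le> sval \<sigma> (last (Ps!k))"
proof (rule ccontr)
  assume c: "\<not> ?thesis"
  let ?l = "posf \<sigma> Ps x"
  have l: "?l < length Ps" using assms by simp
  have "\<not> sval \<sigma> (last (Ps!?l)) < sval \<sigma> x"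
    unfolding posf_def using l unfolding posf_def by (rule nth_length_takeWhile)
  moreover have "sval \<sigma> (last (Ps!?l)) \<le> sval \<sigma> (last (Ps!k))"
  proof (cases "?l = k")
    case False
    then have "?l < k" using assms by simp
    have "\<forall>a b. a < b \<longrightarrow> b < length Ps \<longrightarrow> sval \<sigma> (last (Ps!a)) < sval \<sigma> (last (Ps!b))"
      using assms(1) unfolding wfP_def sorted_wrt_iff_nth_less by blast
    then show ?thesis using \<open>?l < k\<close> assms(3) by (simp add: less_imp_le)
  qed simp
  ultimately show False using c by simp
qed

lemma ps_step_posf:
  assumes "wfP \<sigma> Ps"
  shows "ps_step \<sigma> Ps x = (if posf \<sigma> Ps x = length Ps then Ps @ [[x]]
           else Ps[posf \<sigma> Ps x := Ps ! posf \<sigma> Ps x @ [x]])"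
proof (cases "Ps = [] \<or> sval \<sigma> x > sval \<sigma> (last (last Ps))")
  case True
  have "posf \<sigma> Ps x = length Ps"
  proof (cases "Ps = []")
    case False
    with True have lt: "sval \<sigma> x > sval \<sigma> (last (last Ps))" by simp
    have "\<forall>p\<in>set Ps. sval \<sigma> (last p) < sval \<sigma> x"
    proof
      fix p assume "p \<in> set Ps"
      then obtain k where k: "k < length Ps" "p = Ps!k" by (auto simp: in_set_conv_nth)
      have "last Ps = Ps ! (length Ps - 1)" using False by (simp add: last_conv_nth)
      moreover have "k = length Ps - 1 \<or> k < length Ps - 1" using k by linarith
      moreover have "\<forall>a b. a < b \<longrightarrow> b < length Ps \<longrightarrow> sval \<sigma> (last (Ps!a)) < sval \<sigma> (last (Ps!b))"
        using assms unfolding wfP_def sorted_wrt_iff_nth_less by blast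
      ultimately have "sval \<sigma> (last p) \<le> sval \<sigma> (last (last Ps))"
        using k False by (cases "k = length Ps - 1") (auto simp: less_imp_le)
      then show "sval \<sigma> (last p) < sval \<sigma> x" using lt by simp
    qed
    then show ?thesis unfolding posf_def by (simp add: takeWhile_eq_all_conv[THEN iffD2])
  qed (simp add: posf_def)
  then show ?thesis using True unfolding ps_step_def by simp
next
  case False
  then have ne: "Ps \<noteq> []" and le: "sval \<sigma> x \<le> sval \<sigma> (last (last Ps))" by auto
  let ?p = "posf \<sigma> Ps x"
  have "?p \<noteq> length Ps"
  proof
    assume "?p = length Ps"
    then have "sval \<sigma> (last (Ps ! (length Ps - 1))) < sval \<sigma> x"
      using ne by (intro posf_lt) simp
    then show False using le ne by (simp add: last_conv_nth)
  qed
  then have plt: "?p < length Ps" using posf_le[of \<sigma> Ps x] by simp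
  have "(LEAST h. h < length Ps \<and> sval \<sigma> x \<le> sval \<sigma> (last (Ps ! h))) = ?p"
  proof (rule Least_equality)
    show "?p < length Ps \<and> sval \<sigma> x \<le> sval \<sigma> (last (Ps ! ?p))"
      using plt posf_ge[OF assms] by simp
    show "\<And>y. y < length Ps \<and> sval \<sigma> x \<le> sval \<sigma> (last (Ps ! y)) \<Longrightarrow> ?p \<le> y"
      using posf_lt by (metis not_le not_less_iff_gr_or_eq)
  qed
  then show ?thesis using False \<open>?p \<noteq> length Ps\<close> unfolding ps_step_def by (simp add: Let_def)
qed

lemma wfP_step:
  assumes "wfP \<sigma> Ps"
  shows "wfP \<sigma> (ps_step \<sigma> Ps x)"
proof -
  let ?p = "posf \<sigma> Ps x"
  have s: "\<And>a b. a < b \<Longrightarrow> b < length Ps \<Longrightarrow> sval \<sigma> (last (Ps!a)) < sval \<sigma> (last (Ps!b))"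
    using assms unfolding wfP_def sorted_wrt_iff_nth_less by blast
  have ne: "\<And>a. a < length Ps \<Longrightarrow> Ps!a \<noteq> []" using assms unfolding wfP_def by auto
  show ?thesis
  proof (cases "?p = length Ps")
    case True
    have "sorted_wrt (\<lambda>p q. sval \<sigma> (last p) < sval \<sigma> (last q)) (Ps @ [[x]])"
      unfolding sorted_wrt_iff_nth_less
    proof (intro allI impI)
      fix a b assume ab: "a < b" "b < length (Ps @ [[x]])"
      show "sval \<sigma> (last ((Ps @ [[x]])!a)) < sval \<sigma> (last ((Ps @ [[x]])!b))"
      proof (cases "b < length Ps")
        case True then show ?thesis using ab s by (simp add: nth_append)
      next
        case False
        then have "b = length Ps" using ab by simp
        then show ?thesis using ab posf_lt[of a \<sigma> Ps x] True by (simp add: nth_append)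
      qed
    qed
    then show ?thesis using True assms unfolding ps_step_posf[OF assms] wfP_def by simp
  next
    case False
    then have plt: "?p < length Ps" using posf_le[of \<sigma> Ps x] by simp
    let ?L = "Ps[?p := Ps ! ?p @ [x]]"
    have lastL: "\<And>a. a < length Ps \<Longrightarrow> last (?L ! a) = (if a = ?p then x else last (Ps!a))"
      by (simp add: nth_list_update)
    have "sorted_wrt (\<lambda>p q. sval \<sigma> (last p) < sval \<sigma> (last q)) ?L"
      unfolding sorted_wrt_iff_nth_less
    proof (intro allI impI)
      fix a b assume ab: "a < b" "b < length ?L"
      then have b: "b < length Ps" by simp
      have "a < length Ps" using ab by simp
      show "sval \<sigma> (last (?L!a)) < sval \<sigma> (last (?L!b))"
        unfolding lastL[OF b] lastL[OF \<open>a < length Ps\<close>]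
      proof (cases "a = ?p")
        case True
        then show "sval \<sigma> (if a = ?p then x else last (Ps ! a)) < sval \<sigma> (if b = ?p then x else last (Ps ! b))"
          using ab posf_ge[OF assms, of x ?p] s[of ?p b] plt b by simp
      next
        case False
        then show "sval \<sigma> (if a = ?p then x else last (Ps ! a)) < sval \<sigma> (if b = ?p then x else last (Ps ! b))"
        proof (cases "b = ?p")
          case True
          then show ?thesis using ab False posf_lt[of a \<sigma> Ps x] by simp
        next
          case F2: False
          then show ?thesis using ab False s[of a b] b by simp
        qed
      qed
    qed
    moreover have "\<forall>q\<in>set ?L. q \<noteq> []"
    proof
      fix q assume "q \<in> set ?L"
      then obtain a where a: "a < length Ps" "q = ?L ! a" by (auto simp: in_set_conv_nth)
      then show "q \<noteq> []" using ne[of a] by (cases "a = ?p") auto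
    qed
    ultimately show ?thesis using False unfolding ps_step_posf[OF assms] wfP_def by simp
  qed
qed

lemma wfP_PS: "wfP \<sigma> (PS \<sigma> t)"
  by (induction t) (simp add: wfP_def, simp add: PS_Suc wfP_step)

definition posat :: "int list \<Rightarrow> nat \<Rightarrow> nat \<Rightarrow> bool" where
  "posat \<sigma> k x \<longleftrightarrow> posf \<sigma> (PS \<sigma> (x - 1)) x = k"

lemma PS_filter:
  "(k < length (PS \<sigma> t) \<longrightarrow> PS \<sigma> t ! k = filter (posat \<sigma> k) [1..<Suc t]) \<and>
   (length (PS \<sigma> t) \<le> k \<longrightarrow> filter (posat \<sigma> k) [1..<Suc t] = [])"
proof (induction t arbitrary: k)
  case 0
  then show ?case by simp
next
  case (Suc t)
  let ?p = "posf \<sigma> (PS \<sigma> t) (Suc t)"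
  have pa: "posat \<sigma> k (Suc t) \<longleftrightarrow> ?p = k" by (simp add: posat_def)
  have fl: "filter (posat \<sigma> k) [1..<Suc (Suc t)] = filter (posat \<sigma> k) [1..<Suc t] @ (if ?p = k then [Suc t] else [])"
    using pa by simp
  have st: "PS \<sigma> (Suc t) = (if ?p = length (PS \<sigma> t) then PS \<sigma> t @ [[Suc t]]
           else (PS \<sigma> t)[?p := (PS \<sigma> t) ! ?p @ [Suc t]])"
    by (simp add: PS_Suc ps_step_posf[OF wfP_PS])
  have ple: "?p \<le> length (PS \<sigma> t)" by (rule posf_le)
  consider (lt) "k < length (PS \<sigma> t)" | (eq) "k = length (PS \<sigma> t)" | (gt) "k > length (PS \<sigma> t)"
    by linarith
  then show ?case
  proof cases
    case lt
    then have I: "PS \<sigma> t ! k = filter (posat \<sigma> k) [1..<Suc t]" using Suc.IH[of k] by simp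
    show ?thesis
    proof (cases "?p = length (PS \<sigma> t)")
      case True
      then show ?thesis unfolding fl st using lt I by (simp add: nth_append)
    next
      case False
      then show ?thesis unfolding fl st using lt I by (simp add: nth_list_update)
    qed
  next
    case eq
    then have I: "filter (posat \<sigma> k) [1..<Suc t] = []" using Suc.IH[of k] by simp
    show ?thesis
    proof (cases "?p = length (PS \<sigma> t)")
      case True
      then show ?thesis unfolding fl st using eq I by (simp add: nth_append)
    next
      case False
      then show ?thesis unfolding fl st using eq I ple by simp
    qed
  next
    case gt
    then have I: "filter (posat \<sigma> k) [1..<Suc t] = []" using Suc.IH[of k] by simp
    show ?thesis
    proof (cases "?p = length (PS \<sigma> t)")
      case True
      then show ?thesis unfolding fl st using gt I by simp
    next
      case False
      then show ?thesis unfolding fl st using gt I ple by simp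
    qed
  qed
qed

lemma length_PS: "length (PS \<sigma> t) \<le> t"
  by (induction t) (simp_all add: PS_Suc ps_step_posf[OF wfP_PS])


definition prog :: "instr list" where
  "prog = [Const 1 2,
    Const 4 1,
    Add 0 0 4,
    InLen 4,
    Less 5 4 0,
    Jz 5 7,
    Halt,
    AuxRead 4 1,
    Sub 5 4 0,
    Sub 4 0 4,
    Add 4 4 5,
    Jz 4 25,
    Const 4 2,
    Sub 4 1 4,
    Jz 4 21,
    Const 4 1,
    Sub 4 1 4,
    AuxRead 4 4,
    CmpIn 4 0 4,
    Jz 4 28,
    Jmp 1,
    Const 4 0,
    AuxRead 4 4,
    Jz 4 28,
    Jmp 1,
    Const 4 1,
    Add 1 1 4,
    Jmp 1,
    Const 2 0,
    Const 4 0,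
    AuxRead 3 4,
    Const 4 1,
    AuxRead 4 4,
    Sub 3 4 3,
    Less 4 2 3,
    Jz 4 51,
    Add 4 2 3,
    Const 5 2,
    Div 4 4 5,
    Const 5 6,
    Add 5 5 4,
    Load 5 5,
    Jz 5 45,
    CmpIn 5 0 5,
    Jz 5 48,
    Const 5 0,
    Add 3 4 5,
    Jmp 34,
    Const 5 1,
    Add 2 4 5,
    Jmp 34,
    Const 4 0,
    AuxRead 5 4,
    Const 4 1,
    AuxRead 4 4,
    Sub 4 4 5,
    Less 5 2 4,
    Jz 5 1,
    Const 5 6,
    Add 5 5 2,
    Store 0 5,
    Const 5 1,
    Add 5 2 5,
    Sub 5 4 5,
    Jz 5 66,
    Jmp 1,
    Out 0,
    Jmp 1]"

lemma prog_len: "length prog = 68"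
  by (simp add: prog_def)

lemma prog_nth[simp]:
  "prog ! 0 = Const 1 2"
  "prog ! 1 = Const 4 1"
  "prog ! Suc 0 = Const 4 1"
  "prog ! 2 = Add 0 0 4"
  "prog ! 3 = InLen 4"
  "prog ! 4 = Less 5 4 0"
  "prog ! 5 = Jz 5 7"
  "prog ! 6 = Halt"
  "prog ! 7 = AuxRead 4 1"
  "prog ! 8 = Sub 5 4 0"
  "prog ! 9 = Sub 4 0 4"
  "prog ! 10 = Add 4 4 5"
  "prog ! 11 = Jz 4 25"
  "prog ! 12 = Const 4 2"
  "prog ! 13 = Sub 4 1 4"
  "prog ! 14 = Jz 4 21"
  "prog ! 15 = Const 4 1"
  "prog ! 16 = Sub 4 1 4"
  "prog ! 17 = AuxRead 4 4"
  "prog ! 18 = CmpIn 4 0 4"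
  "prog ! 19 = Jz 4 28"
  "prog ! 20 = Jmp 1"
  "prog ! 21 = Const 4 0"
  "prog ! 22 = AuxRead 4 4"
  "prog ! 23 = Jz 4 28"
  "prog ! 24 = Jmp 1"
  "prog ! 25 = Const 4 1"
  "prog ! 26 = Add 1 1 4"
  "prog ! 27 = Jmp 1"
  "prog ! 28 = Const 2 0"
  "prog ! 29 = Const 4 0"
  "prog ! 30 = AuxRead 3 4"
  "prog ! 31 = Const 4 1"
  "prog ! 32 = AuxRead 4 4"
  "prog ! 33 = Sub 3 4 3"
  "prog ! 34 = Less 4 2 3"
  "prog ! 35 = Jz 4 51"
  "prog ! 36 = Add 4 2 3"
  "prog ! 37 = Const 5 2"
  "prog ! 38 = Div 4 4 5"
  "prog ! 39 = Const 5 6"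
  "prog ! 40 = Add 5 5 4"
  "prog ! 41 = Load 5 5"
  "prog ! 42 = Jz 5 45"
  "prog ! 43 = CmpIn 5 0 5"
  "prog ! 44 = Jz 5 48"
  "prog ! 45 = Const 5 0"
  "prog ! 46 = Add 3 4 5"
  "prog ! 47 = Jmp 34"
  "prog ! 48 = Const 5 1"
  "prog ! 49 = Add 2 4 5"
  "prog ! 50 = Jmp 34"
  "prog ! 51 = Const 4 0"
  "prog ! 52 = AuxRead 5 4"
  "prog ! 53 = Const 4 1"
  "prog ! 54 = AuxRead 4 4"
  "prog ! 55 = Sub 4 4 5"
  "prog ! 56 = Less 5 2 4"
  "prog ! 57 = Jz 5 1"
  "prog ! 58 = Const 5 6"
  "prog ! 59 = Add 5 5 2"
  "prog ! 60 = Store 0 5"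
  "prog ! 61 = Const 5 1"
  "prog ! 62 = Add 5 2 5"
  "prog ! 63 = Sub 5 4 5"
  "prog ! 64 = Jz 5 66"
  "prog ! 65 = Jmp 1"
  "prog ! 66 = Out 0"
  "prog ! 67 = Jmp 1"
  by (simp_all add: prog_def)

function bl :: "nat \<Rightarrow> nat" where
  "bl n = (if n = 0 then 0 else Suc (bl (n div 2)))"
  by auto
termination by (relation "measure id") auto

declare bl.simps[simp del]

lemma bl_0[simp]: "bl 0 = 0" by (simp add: bl.simps)
lemma bl_pos: "0 < n \<Longrightarrow> bl n = Suc (bl (n div 2))" by (simp add: bl.simps)

lemma bl_mono: "a \<le> b \<Longrightarrow> bl a \<le> bl b"
proof (induction b arbitrary: a rule: less_induct)
  case (less b)
  show ?case
  proof (cases "a = 0")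
    case False
    then have "0 < a" "0 < b" "b div 2 < b" "a div 2 \<le> b div 2" using less.prems by (auto intro: div_le_mono)
    then show ?thesis using less.IH[of "b div 2" "a div 2"] by (simp add: bl_pos)
  qed simp
qed

lemma bl_pow: "0 < n \<Longrightarrow> 2 ^ bl n \<le> 2 * n"
proof (induction n rule: less_induct)
  case (less n)
  show ?case
  proof (cases "n div 2 = 0")
    case True
    then show ?thesis using less.prems by (simp add: bl_pos)
  next
    case False
    then have "2 ^ bl (n div 2) \<le> 2 * (n div 2)" using less.IH[of "n div 2"] less.prems by simp
    then show ?thesis using less.prems by (simp add: bl_pos)
  qed
qed

locale sim =
  fixes \<sigma> :: "int list" and i j :: nat
  assumes ij: "i < j" and jlen: "j \<le> length (piles \<sigma>)"
begin

definition A :: "nat list" where "A = [i, j] @ pile \<sigma> i"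
definition d :: nat where "d = j - i"

abbreviation stp where "stp \<equiv> step prog \<sigma> A"
abbreviation W where "W \<equiv> (2::nat) ^ word_size (length \<sigma>)"

lemma j_le_n: "j \<le> length \<sigma>"
  using jlen length_PS[of \<sigma> "length \<sigma>"] by (simp add: piles_PS)

lemma n_pos: "1 \<le> length \<sigma>" using j_le_n ij by simp

lemma W_ge: "2 * length \<sigma> + 4 \<le> W"
proof -
  let ?n = "length \<sigma>"
  let ?c = "\<lceil>log 2 (real ?n + 2)\<rceil>"
  have lg: "1 \<le> log 2 (real ?n + 2)"
  proof -
    have "log 2 2 \<le> log 2 (real ?n + 2)" by (subst log_le_cancel_iff) simp_all
    then show ?thesis by simp
  qed
  have c0: "?c \<ge> 0" using lg by linarith
  have "real ?n + 2 = 2 powr (log 2 (real ?n + 2))" by simp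
  also have "\<dots> \<le> 2 powr (real_of_int ?c)"
    by (rule powr_mono) (simp_all add: le_of_int_ceiling)
  also have "2 powr (real_of_int ?c) = (2::real) ^ nat ?c"
  proof -
    have "real_of_int ?c = real (nat ?c)" using c0 by simp
    then have "2 powr (real_of_int ?c) = 2 powr real (nat ?c)" by simp
    also have "\<dots> = (2::real) ^ nat ?c" by (rule powr_realpow) simp
    finally show ?thesis .
  qed
  finally have "real (?n + 2) \<le> real (2 ^ nat ?c)" by simp
  then have "?n + 2 \<le> 2 ^ nat ?c" by (simp only: of_nat_le_iff)
  then show ?thesis unfolding word_size_def by simp
qed

lemma stp_eq: "stp (pc, M, out) = (if pc < 68 \<and> prog ! pc \<noteq> Halt then exec (word_size (length \<sigma>)) \<sigma> A (prog ! pc) (pc, M, out) else (pc, M, out))"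
  unfolding step_def halted_def prog_len by (simp add: not_le)

lemma funpow_S: "(stp ^^ Suc k) c = (stp ^^ k) (stp c)"
  by (simp only: funpow_Suc_right comp_apply)

lemma funpow_N: "(stp ^^ numeral k) c = (stp ^^ pred_numeral k) (stp c)"
proof -
  have "numeral k = Suc (pred_numeral k)" by (rule numeral_eq_Suc)
  then show ?thesis using funpow_S by metis
qed

lemma funpow_1: "(stp ^^ Suc 0) c = stp c" by simp
lemma funpow_1': "(stp ^^ 1) c = stp c" by simp

lemma runs_trans: "(stp ^^ (a + b)) c = c''" if "(stp ^^ a) c = c'" "(stp ^^ b) c' = c''"
proof -
  have "(stp ^^ (a + b)) c = (stp ^^ (b + a)) c" by (simp add: add.commute)
  also have "\<dots> = (stp ^^ b) ((stp ^^ a) c)" by (simp add: funpow_add)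
  finally show ?thesis using that by simp
qed

lemma w_pos[simp]: "0 < word_size (length \<sigma>)" by (simp add: word_size_def)

lemma W_ge8: "8 \<le> W"
proof -
  have "log 2 2 < log 2 (real (length \<sigma>) + 2)"
  proof -
    have "\<sigma> \<noteq> []" using n_pos by auto
    then show ?thesis by (subst log_less_cancel_iff) simp_all
  qed
  then have "1 < log 2 (real (length \<sigma>) + 2)" by simp
  then have "2 \<le> \<lceil>log 2 (real (length \<sigma>) + 2)\<rceil>" by linarith
  then have "3 \<le> word_size (length \<sigma>)" unfolding word_size_def by linarith
  then have "(2::nat) ^ 3 \<le> W" by (rule power_increasing) simp
  then show ?thesis by simp
qed

lemma W_ge2: "length \<sigma> + 5 < W" using W_ge W_ge8 n_pos by linarith

lemma mod_consts[simp]: "Suc 0 mod W = Suc 0" "2 mod W = 2" "6 mod W = 6"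
proof -
  show "Suc 0 mod W = Suc 0" "2 mod W = 2" "6 mod W = 6"
    using W_ge2 n_pos by (simp_all add: mod_less)
qed

lemma exec_pc[simp]:
  "exec w \<sigma>' A' (Const r k) (pc, M, out) = (pc + 1, M(r := k mod 2^w), out)"
  "exec w \<sigma>' A' (Add r a b) (pc, M, out) = (pc + 1, M(r := (M a + M b) mod 2^w), out)"
  "exec w \<sigma>' A' (Sub r a b) (pc, M, out) = (pc + 1, M(r := M a - M b), out)"
  "exec w \<sigma>' A' (Div r a b) (pc, M, out) = (pc + 1, M(r := M a div M b), out)"
  "exec w \<sigma>' A' (Less r a b) (pc, M, out) = (pc + 1, M(r := (if M a < M b then 1 else 0)), out)"
  "exec w \<sigma>' A' (Load r a) (pc, M, out) = (pc + 1, M(r := M (M a)), out)"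
  "exec w \<sigma>' A' (Store r a) (pc, M, out) = (pc + 1, M(M a := M r), out)"
  "exec w \<sigma>' A' (InLen r) (pc, M, out) = (pc + 1, M(r := length \<sigma>' mod 2^w), out)"
  "exec w \<sigma>' A' (CmpIn r a b) (pc, M, out) =
     (pc + 1, M(r := (if 1 \<le> M a \<and> M a \<le> length \<sigma>' \<and> 1 \<le> M b \<and> M b \<le> length \<sigma>'
                         \<and> sval \<sigma>' (M a) \<le> sval \<sigma>' (M b) then 1 else 0)), out)"
  "exec w \<sigma>' A' (AuxRead r a) (pc, M, out) =
     (pc + 1, M(r := (if M a < length A' then A' ! (M a) mod 2^w else 0)), out)"
  "exec w \<sigma>' A' (Jz r t) (pc, M, out) = ((if M r = 0 then t else pc + 1), M, out)"
  "exec w \<sigma>' A' (Jmp t) (pc, M, out) = (t, M, out)"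
  "exec w \<sigma>' A' (Out r) (pc, M, out) = (pc + 1, M, out @ [M r])"
  by simp_all

declare exec.simps[simp del]

lemma two_nat[simp]: "Suc (Suc 0) = 2" by simp

definition Qv :: "nat \<Rightarrow> nat" where
  "Qv t = 2 + (if i = 0 then 0 else length (filter (posat \<sigma> (i - 1)) [1..<Suc t]))"
definition Wv :: "nat \<Rightarrow> nat list" where
  "Wv t = map last (take d (drop i (PS \<sigma> t)))"
definition Ov :: "nat \<Rightarrow> nat list" where
  "Ov t = filter (posat \<sigma> (j - 1)) [1..<Suc t]"
definition slots :: "nat list \<Rightarrow> (nat \<Rightarrow> nat) \<Rightarrow> bool" where
  "slots L M \<longleftrightarrow> (\<forall>r\<ge>6. M r = (if r - 6 < length L then L ! (r - 6) else 0))"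
definition SR :: "nat \<Rightarrow> (nat \<Rightarrow> nat) \<Rightarrow> bool" where
  "SR t M \<longleftrightarrow> M 0 = t \<and> M 1 = Qv t \<and> slots (Wv t) M"

lemma upt_split: "a \<le> b \<Longrightarrow> b \<le> c \<Longrightarrow> [a..<c] = [a..<b] @ [b..<c]"
  using upt_add_eq_append[of a b "c - b"] by simp

lemma PS_mem: "k < length (PS \<sigma> t) \<Longrightarrow> y \<in> set (PS \<sigma> t ! k) \<Longrightarrow> 1 \<le> y \<and> y \<le> t"
  using PS_filter[of k \<sigma> t] by auto

lemma PS_ne: "k < length (PS \<sigma> t) \<Longrightarrow> PS \<sigma> t ! k \<noteq> []"
  using wfP_PS[of \<sigma> t] unfolding wfP_def by (metis nth_mem)

lemma posat_Suc: "posat \<sigma> k (Suc t) \<longleftrightarrow> posf \<sigma> (PS \<sigma> t) (Suc t) = k"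
  by (simp add: posat_def)

lemma d_pos: "0 < d" using ij by (simp add: d_def)
lemma d_le: "d \<le> length \<sigma>" using j_le_n by (simp add: d_def)
lemma j_len: "j - 1 < length (PS \<sigma> (length \<sigma>))" using jlen ij by (simp add: piles_PS)
lemma i_len: "0 < i \<Longrightarrow> i - 1 < length (PS \<sigma> (length \<sigma>))" using jlen ij by (simp add: piles_PS)

lemma pile_i: "0 < i \<Longrightarrow> pile \<sigma> i = filter (posat \<sigma> (i - 1)) [1..<Suc (length \<sigma>)]"
  using PS_filter[of "i - 1" \<sigma> "length \<sigma>"] i_len by (simp add: pile_def piles_PS)

lemma pile_j: "pile \<sigma> j = Ov (length \<sigma>)"
  using PS_filter[of "j - 1" \<sigma> "length \<sigma>"] j_len ij by (simp add: pile_def piles_PS Ov_def)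

lemma A_0[simp]: "A ! 0 = i" by (simp add: A_def)
lemma A_1[simp]: "A ! Suc 0 = j" by (simp add: A_def)
lemma A_SS[simp]: "A ! Suc (Suc k) = pile \<sigma> i ! k" by (simp add: A_def)
lemma len_A: "length A = 2 + length (pile \<sigma> i)" by (simp add: A_def)

lemma pile_i_mem: "y \<in> set (pile \<sigma> i) \<Longrightarrow> 1 \<le> y \<and> y \<le> length \<sigma>"
proof (cases "i = 0")
  case True
  assume "y \<in> set (pile \<sigma> i)"
  moreover have "pile \<sigma> i = []" using True by (simp add: pile_def)
  ultimately show ?thesis by simp
next
  case False
  assume "y \<in> set (pile \<sigma> i)"
  then show ?thesis using False by (auto simp: pile_i)
qed

lemma len_pile_i: "length (pile \<sigma> i) \<le> length \<sigma>"
proof (cases "i = 0")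
  case True then show ?thesis by (simp add: pile_def)
next
  case False
  then show ?thesis unfolding pile_i[OF _] using length_filter_le[of _ "[1..<Suc (length \<sigma>)]"]
    by (metis bot_nat_0.not_eq_extremum diff_Suc_1 length_upt pile_i)
qed

lemma A_bound: "k < length A \<Longrightarrow> A ! k \<le> length \<sigma>"
proof -
  assume k: "k < length A"
  consider "k = 0" | "k = 1" | m where "k = Suc (Suc m)" by (metis One_nat_def not0_implies_Suc)
  then show ?thesis
  proof cases
    case 1 then show ?thesis using ij j_le_n by simp
  next
    case 2 then show ?thesis using j_le_n by simp
  next
    case 3
    then have "m < length (pile \<sigma> i)" using k len_A by simp
    then show ?thesis using 3 pile_i_mem[OF nth_mem] by simp
  qed
qed

lemma A_mod: "k < length A \<Longrightarrow> A ! k mod W = A ! k"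
  using A_bound[of k] W_ge2 by simp

lemma len_A_bound: "length A \<le> length \<sigma> + 2" using len_A len_pile_i by simp

abbreviation cur :: "nat \<Rightarrow> nat list" where
  "cur t \<equiv> filter (posat \<sigma> (i - 1)) [1..<Suc t]"

lemma pile_i_split: "0 < i \<Longrightarrow> t \<le> length \<sigma> \<Longrightarrow>
   pile \<sigma> i = cur t @ filter (posat \<sigma> (i - 1)) [Suc t..<Suc (length \<sigma>)]"
  using upt_split[of 1 "Suc t" "Suc (length \<sigma>)"] by (simp add: pile_i)

lemma Qv_le: "t \<le> length \<sigma> \<Longrightarrow> Qv t \<le> length A"
proof (cases "i = 0")
  case True
  have "Qv t = 2" unfolding Qv_def using True by simp
  then show ?thesis by (simp add: len_A)
next
  case False
  assume t: "t \<le> length \<sigma>"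
  have "length (cur t) \<le> length (pile \<sigma> i)" using pile_i_split[OF _ t] False by simp
  then show ?thesis using False by (simp add: Qv_def len_A)
qed

lemma B1:
  assumes "t < length \<sigma>"
  shows "(Qv t < length A \<and> A ! Qv t = Suc t) \<longleftrightarrow> (0 < i \<and> posat \<sigma> (i - 1) (Suc t))"
proof (cases "i = 0")
  case True
  have "Qv t = 2" unfolding Qv_def using True by simp
  moreover have "length A = 2" unfolding len_A using True by (simp add: pile_def)
  ultimately show ?thesis using True by simp
next
  case False
  let ?P = "posat \<sigma> (i - 1)"
  let ?rest = "filter ?P [Suc (Suc t)..<Suc (length \<sigma>)]"
  have "[Suc t..<Suc (length \<sigma>)] = Suc t # [Suc (Suc t)..<Suc (length \<sigma>)]"
    using assms by (simp add: upt_conv_Cons)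
  then have sp: "pile \<sigma> i = cur t @ (if ?P (Suc t) then [Suc t] else []) @ ?rest"
    using pile_i_split[of t] False assms by simp
  have Q: "Qv t = Suc (Suc (length (cur t)))" using False by (simp add: Qv_def)
  show ?thesis
  proof (cases "?P (Suc t)")
    case True
    then have "pile \<sigma> i ! length (cur t) = Suc t" "length (cur t) < length (pile \<sigma> i)"
      using sp by (simp_all add: nth_append)
    then show ?thesis using True False Q len_A by simp
  next
    case F: False
    have "Qv t < length A \<Longrightarrow> A ! Qv t \<noteq> Suc t"
    proof -
      assume "Qv t < length A"
      then have lt: "0 < length ?rest" using sp F Q len_A by simp
      have "A ! Qv t = ?rest ! 0" using sp F Q by (simp add: nth_append)
      moreover have "?rest ! 0 \<in> set ?rest" using lt by (rule nth_mem)
      moreover have "\<forall>y \<in> set ?rest. Suc (Suc t) \<le> y" by (simp del: upt_Suc)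
      ultimately show ?thesis by fastforce
    qed
    then show ?thesis using F by auto
  qed
qed

lemma B2:
  assumes "0 < i" "Qv t = 2"
  shows "posf \<sigma> (PS \<sigma> t) (Suc t) < i"
proof -
  have c: "cur t = []" using assms by (simp add: Qv_def)
  have "\<not> i - 1 < length (PS \<sigma> t)"
  proof
    assume "i - 1 < length (PS \<sigma> t)"
    then have "PS \<sigma> t ! (i - 1) = cur t" using PS_filter[of "i - 1" \<sigma> t] by simp
    then show False using c PS_ne \<open>i - 1 < length (PS \<sigma> t)\<close> by simp
  qed
  then show ?thesis using posf_le[of \<sigma> "PS \<sigma> t" "Suc t"] assms by linarith
qed

lemma B3:
  assumes "0 < i" "t < length \<sigma>" "2 < Qv t"
  shows "i - 1 < length (PS \<sigma> t) \<and> Qv t - 1 < length A \<and> A ! (Qv t - 1) = last (PS \<sigma> t ! (i - 1))"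
proof -
  have c: "cur t \<noteq> []" using assms by (simp add: Qv_def)
  have il: "i - 1 < length (PS \<sigma> t)"
  proof (rule ccontr)
    assume "\<not> i - 1 < length (PS \<sigma> t)"
    then have "cur t = []" using PS_filter[of "i - 1" \<sigma> t] by simp
    then show False using c by simp
  qed
  then have e: "PS \<sigma> t ! (i - 1) = cur t" using PS_filter[of "i - 1" \<sigma> t] by simp
  obtain m where m: "length (cur t) = Suc m" using c by (cases "length (cur t)") auto
  have Q: "Qv t - 1 = Suc (Suc m)" using assms m by (simp add: Qv_def)
  have sp: "pile \<sigma> i = cur t @ filter (posat \<sigma> (i - 1)) [Suc t..<Suc (length \<sigma>)]"
    using pile_i_split[of t] assms by simp
  have "A ! (Qv t - 1) = cur t ! m" unfolding Q A_SS sp using m by (simp add: nth_append)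
  also have "\<dots> = last (cur t)" using m c by (simp add: last_conv_nth)
  finally have "A ! (Qv t - 1) = last (PS \<sigma> t ! (i - 1))" using e by simp
  moreover have "Qv t - 1 < length A" using Qv_le[of t] assms by simp
  ultimately show ?thesis using il by simp
qed

lemma B4:
  assumes "0 < i" "i - 1 < length (PS \<sigma> t)"
  shows "sval \<sigma> (last (PS \<sigma> t ! (i - 1))) < sval \<sigma> (Suc t) \<longleftrightarrow> i \<le> posf \<sigma> (PS \<sigma> t) (Suc t)"
proof
  assume a: "sval \<sigma> (last (PS \<sigma> t ! (i - 1))) < sval \<sigma> (Suc t)"
  show "i \<le> posf \<sigma> (PS \<sigma> t) (Suc t)"
  proof (rule ccontr)
    assume "\<not> ?thesis"
    then have "posf \<sigma> (PS \<sigma> t) (Suc t) \<le> i - 1" by simp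
    then have "sval \<sigma> (Suc t) \<le> sval \<sigma> (last (PS \<sigma> t ! (i - 1)))"
      using posf_ge[OF wfP_PS] assms by blast
    then show False using a by simp
  qed
next
  assume "i \<le> posf \<sigma> (PS \<sigma> t) (Suc t)"
  then have "i - 1 < posf \<sigma> (PS \<sigma> t) (Suc t)" using assms by simp
  then show "sval \<sigma> (last (PS \<sigma> t ! (i - 1))) < sval \<sigma> (Suc t)" by (rule posf_lt)
qed

lemma top_mem: "k < length (PS \<sigma> t) \<Longrightarrow> 1 \<le> last (PS \<sigma> t ! k) \<and> last (PS \<sigma> t ! k) \<le> t"
  using PS_mem[of k t "last (PS \<sigma> t ! k)"] PS_ne[of k t] by simp

lemma Wv_len: "length (Wv t) = min d (length (PS \<sigma> t) - i)"
  by (simp add: Wv_def)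

lemma Wv_nth: "k < length (Wv t) \<Longrightarrow> Wv t ! k = last (PS \<sigma> t ! (i + k))"
proof -
  assume k: "k < length (Wv t)"
  then have "i \<le> length (PS \<sigma> t)" "k < d" using Wv_len[of t] by linarith+
  then show ?thesis using k by (simp add: Wv_def nth_drop)
qed

lemma Wv_mem: "k < length (Wv t) \<Longrightarrow> 1 \<le> Wv t ! k \<and> Wv t ! k \<le> t"
proof -
  assume k: "k < length (Wv t)"
  then have "i + k < length (PS \<sigma> t)" using Wv_len[of t] by linarith
  then show ?thesis using Wv_nth[OF k] top_mem[of "i + k" t] by simp
qed

lemma Wv_le_d: "length (Wv t) \<le> d" by (simp add: Wv_len)

lemma PS_Suc': "PS \<sigma> (Suc t) = (if posf \<sigma> (PS \<sigma> t) (Suc t) = length (PS \<sigma> t) then PS \<sigma> t @ [[Suc t]]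
   else (PS \<sigma> t)[posf \<sigma> (PS \<sigma> t) (Suc t) := PS \<sigma> t ! posf \<sigma> (PS \<sigma> t) (Suc t) @ [Suc t]])"
  by (simp add: PS_Suc ps_step_posf[OF wfP_PS])

lemma B8:
  assumes "posf \<sigma> (PS \<sigma> t) (Suc t) < i"
  shows "Wv (Suc t) = Wv t"
proof (cases "posf \<sigma> (PS \<sigma> t) (Suc t) = length (PS \<sigma> t)")
  case True
  then show ?thesis using assms by (simp add: Wv_def PS_Suc')
next
  case False
  then show ?thesis using assms by (simp add: Wv_def PS_Suc')
qed

lemma B6:
  assumes "i \<le> posf \<sigma> (PS \<sigma> t) (Suc t)" "d \<le> posf \<sigma> (PS \<sigma> t) (Suc t) - i"
  shows "Wv (Suc t) = Wv t"
proof (cases "posf \<sigma> (PS \<sigma> t) (Suc t) = length (PS \<sigma> t)")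
  case True
  then show ?thesis using assms by (simp add: Wv_def PS_Suc')
next
  case False
  then show ?thesis using assms by (simp add: Wv_def PS_Suc' drop_update_swap)
qed

lemma B7:
  assumes "i \<le> posf \<sigma> (PS \<sigma> t) (Suc t)" "posf \<sigma> (PS \<sigma> t) (Suc t) - i < d"
  shows "posf \<sigma> (PS \<sigma> t) (Suc t) - i \<le> length (Wv t) \<and>
    Wv (Suc t) = (if posf \<sigma> (PS \<sigma> t) (Suc t) - i < length (Wv t)
                  then (Wv t)[posf \<sigma> (PS \<sigma> t) (Suc t) - i := Suc t] else Wv t @ [Suc t])"
proof -
  let ?p = "posf \<sigma> (PS \<sigma> t) (Suc t)"
  let ?Ps = "PS \<sigma> t"
  have ple: "?p \<le> length ?Ps" by (rule posf_le)
  show ?thesis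
  proof (cases "?p = length ?Ps")
    case True
    then have "length (Wv t) = ?p - i" using assms by (simp add: Wv_len)
    moreover have "Wv (Suc t) = Wv t @ [Suc t]"
      using True assms by (simp add: Wv_def PS_Suc')
    ultimately show ?thesis by simp
  next
    case False
    then have lt: "?p - i < length (Wv t)" using assms ple by (simp add: Wv_len)
    have "Wv (Suc t) = (Wv t)[?p - i := Suc t]"
      using False assms by (simp add: Wv_def PS_Suc' drop_update_swap take_update_swap map_update)
    then show ?thesis using lt by simp
  qed
qed

lemma B5:
  assumes "i \<le> posf \<sigma> (PS \<sigma> t) (Suc t)" "k < d" "t < length \<sigma>"
  shows "((if k < length (Wv t) then Wv t ! k else 0) = 0 \<or>
          (1 \<le> Suc t \<and> Suc t \<le> length \<sigma> \<and> 1 \<le> (if k < length (Wv t) then Wv t ! k else 0) \<and>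
           (if k < length (Wv t) then Wv t ! k else 0) \<le> length \<sigma> \<and>
           sval \<sigma> (Suc t) \<le> sval \<sigma> (if k < length (Wv t) then Wv t ! k else 0)))
         \<longleftrightarrow> min (posf \<sigma> (PS \<sigma> t) (Suc t) - i) d \<le> k"
proof (cases "k < length (Wv t)")
  case True
  let ?p = "posf \<sigma> (PS \<sigma> t) (Suc t)"
  have m: "1 \<le> Wv t ! k" "Wv t ! k \<le> t" using Wv_mem[OF True] by auto
  have ik: "i + k < length (PS \<sigma> t)" using True Wv_len[of t] by linarith
  have "sval \<sigma> (Suc t) \<le> sval \<sigma> (Wv t ! k) \<longleftrightarrow> ?p \<le> i + k"
  proof
    assume "sval \<sigma> (Suc t) \<le> sval \<sigma> (Wv t ! k)"
    then show "?p \<le> i + k" using posf_lt[of "i + k" \<sigma> "PS \<sigma> t" "Suc t"] Wv_nth[OF True]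
      by (metis not_le)
  next
    assume "?p \<le> i + k"
    then show "sval \<sigma> (Suc t) \<le> sval \<sigma> (Wv t ! k)"
      using posf_ge[OF wfP_PS _ ik] Wv_nth[OF True] by simp
  qed
  then show ?thesis using True m assms by auto
next
  case False
  then have "length (PS \<sigma> t) - i \<le> k" using assms by (simp add: Wv_len)
  then have "posf \<sigma> (PS \<sigma> t) (Suc t) - i \<le> k" using posf_le[of \<sigma> "PS \<sigma> t" "Suc t"] by linarith
  then show ?thesis using False by simp
qed

lemma Qv_Suc: "Qv (Suc t) = Qv t + (if 0 < i \<and> posat \<sigma> (i - 1) (Suc t) then 1 else 0)"
  by (simp add: Qv_def)

lemma Ov_Suc: "Ov (Suc t) = Ov t @ (if posat \<sigma> (j - 1) (Suc t) then [Suc t] else [])"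
  by (simp add: Ov_def)

lemma slots_upd[simp]: "r < 6 \<Longrightarrow> slots L (M(r := v)) = slots L M"
  by (simp add: slots_def)

lemma slots_frame: "slots L M \<Longrightarrow> (\<forall>r\<ge>6. M' r = M r) \<Longrightarrow> slots L M'"
  by (simp add: slots_def)

lemma i_mod[simp]: "i mod W = i" and j_mod[simp]: "j mod W = j" and n_mod[simp]: "length \<sigma> mod W = length \<sigma>"
  using W_ge2 ij j_le_n by simp_all

lemma lenA_gt[simp]: "A \<noteq> []" "Suc 0 < length A" by (simp_all add: A_def)

lemma small_mod[simp]: "k \<le> length \<sigma> \<Longrightarrow> k mod W = k"
  using W_ge2 by simp

lemma A_lt_W[simp]: "k < length A \<Longrightarrow> A ! k < W"
  using A_bound[of k] W_ge2 by simp

lemma absdiff_mod: "a < W \<Longrightarrow> b < W \<Longrightarrow> ((a - b) + (b - a)) mod W = 0 \<longleftrightarrow> a = b"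
  by (cases "a \<le> b") (auto simp: mod_less)

lemma segA:
  assumes "M 0 = t" "t < length \<sigma>"
  shows "\<exists>M'. (stp ^^ 5) (1, M, out) = (7, M', out) \<and> M' 0 = Suc t \<and> M' 1 = M 1 \<and> (\<forall>r\<ge>6. M' r = M r)"
  using assms W_ge2 by (simp add: funpow_N stp_eq)

lemma segHalt:
  assumes "M 0 = length \<sigma>"
  shows "\<exists>M'. (stp ^^ 5) (1, M, out) = (6, M', out)"
  using assms W_ge2 by (simp add: funpow_N stp_eq)

lemma halted6: "halted prog (6, M, out)"
  by (simp add: halted_def)

lemma segB_eq:
  assumes "M 0 = x" "x \<le> length \<sigma>" "M 1 = q" "q < length A" "A ! q = x"
  shows "\<exists>M'. (stp ^^ 8) (7, M, out) = (1, M', out) \<and> M' 0 = x \<and> M' 1 = Suc q \<and> (\<forall>r\<ge>6. M' r = M r)"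
proof -
  have "A ! q mod W = x" using A_mod assms by simp
  moreover have "Suc q < W" using assms len_A_bound W_ge2 by simp
  ultimately show ?thesis using assms by (simp add: funpow_N stp_eq)
qed

lemma segB_ne:
  assumes "M 0 = x" "1 \<le> x" "x \<le> length \<sigma>" "M 1 = q" "\<not> (q < length A \<and> A ! q = x)"
  shows "\<exists>M'. (stp ^^ 5) (7, M, out) = (12, M', out) \<and> M' 0 = x \<and> M' 1 = q \<and> (\<forall>r\<ge>6. M' r = M r)"
proof (cases "q < length A")
  case True
  have x: "x < W" using assms W_ge2 by simp
  have "((x - A ! q) + (A ! q - x)) mod W \<noteq> 0" using absdiff_mod[OF x A_lt_W[OF True]] assms True by auto
  then show ?thesis using assms True by (simp add: funpow_N stp_eq A_mod)
next
  case False
  have "x mod W \<noteq> 0" using assms by simp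
  then show ?thesis using assms False by (simp add: funpow_N stp_eq)
qed

lemma segC2:
  assumes "M 1 = 2"
  shows "\<exists>M'. (stp ^^ 3) (12, M, out) = (21, M', out) \<and> M' 0 = M 0 \<and> M' 1 = M 1 \<and> (\<forall>r\<ge>6. M' r = M r)"
  using assms by (simp add: funpow_N stp_eq)

lemma segC3:
  assumes "2 < M 1"
  shows "\<exists>M'. (stp ^^ 3) (12, M, out) = (15, M', out) \<and> M' 0 = M 0 \<and> M' 1 = M 1 \<and> (\<forall>r\<ge>6. M' r = M r)"
  using assms by (simp add: funpow_N stp_eq)

lemma segD0:
  assumes "i = 0"
  shows "\<exists>M'. (stp ^^ 3) (21, M, out) = (28, M', out) \<and> M' 0 = M 0 \<and> M' 1 = M 1 \<and> (\<forall>r\<ge>6. M' r = M r)"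
proof -
  have "A ! 0 = i" by simp
  also have "i = 0" by (rule assms)
  finally have "A ! 0 = 0" .
  then show ?thesis by (simp add: funpow_N stp_eq del: A_0)
qed

lemma segD1:
  assumes "i \<noteq> 0"
  shows "\<exists>M'. (stp ^^ 4) (21, M, out) = (1, M', out) \<and> M' 0 = M 0 \<and> M' 1 = M 1 \<and> (\<forall>r\<ge>6. M' r = M r)"
  using assms by (simp add: funpow_N stp_eq)

lemma segE_above:
  assumes "M 0 = x" "1 \<le> x" "x \<le> length \<sigma>" "M 1 = q" "2 < q" "q - 1 < length A" "A ! (q - 1) = tp"
    "1 \<le> tp" "tp \<le> length \<sigma>" "sval \<sigma> tp < sval \<sigma> x"
  shows "\<exists>M'. (stp ^^ 5) (15, M, out) = (28, M', out) \<and> M' 0 = M 0 \<and> M' 1 = M 1 \<and> (\<forall>r\<ge>6. M' r = M r)"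
proof -
  have "A ! (q - 1) mod W = tp" using A_mod assms by simp
  then show ?thesis using assms by (simp add: funpow_N stp_eq)
qed

lemma segE_not:
  assumes "M 0 = x" "1 \<le> x" "x \<le> length \<sigma>" "M 1 = q" "2 < q" "q - 1 < length A" "A ! (q - 1) = tp"
    "1 \<le> tp" "tp \<le> length \<sigma>" "sval \<sigma> x \<le> sval \<sigma> tp"
  shows "\<exists>M'. (stp ^^ 6) (15, M, out) = (1, M', out) \<and> M' 0 = M 0 \<and> M' 1 = M 1 \<and> (\<forall>r\<ge>6. M' r = M r)"
proof -
  have "A ! (q - 1) mod W = tp" using A_mod assms by simp
  then show ?thesis using assms by (simp add: funpow_N stp_eq)
qed

lemma segF:
  "\<exists>M'. (stp ^^ 6) (28, M, out) = (34, M', out) \<and> M' 0 = M 0 \<and> M' 1 = M 1 \<and> M' 2 = 0 \<and> M' 3 = d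
     \<and> (\<forall>r\<ge>6. M' r = M r)"
  by (simp add: funpow_N stp_eq d_def)

lemma segG_lt:
  assumes "M 2 = h" "h < d"
  shows "\<exists>M'. (stp ^^ 7) (51, M, out) = (58, M', out) \<and> M' 0 = M 0 \<and> M' 1 = M 1 \<and> M' 2 = h \<and> M' 4 = d
     \<and> (\<forall>r\<ge>6. M' r = M r)"
  using assms by (simp add: funpow_N stp_eq d_def)

lemma segG_ge:
  assumes "M 2 = h" "d \<le> h"
  shows "\<exists>M'. (stp ^^ 7) (51, M, out) = (1, M', out) \<and> M' 0 = M 0 \<and> M' 1 = M 1
     \<and> (\<forall>r\<ge>6. M' r = M r)"
  using assms by (simp add: funpow_N stp_eq d_def)

lemma segH_out:
  assumes "M 2 = h" "M 4 = d" "Suc h = d"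
  shows "\<exists>M'. (stp ^^ 9) (58, M, out) = (1, M', out @ [M 0]) \<and> M' 0 = M 0 \<and> M' 1 = M 1
     \<and> (\<forall>r\<ge>6. M' r = (M(6 + h := M 0)) r)"
proof -
  have "6 + h < W" "Suc h < W" using assms d_le W_ge2 by simp_all
  then show ?thesis using assms by (simp add: funpow_N stp_eq)
qed

lemma segH_no:
  assumes "M 2 = h" "M 4 = d" "Suc h < d"
  shows "\<exists>M'. (stp ^^ 8) (58, M, out) = (1, M', out) \<and> M' 0 = M 0 \<and> M' 1 = M 1
     \<and> (\<forall>r\<ge>6. M' r = (M(6 + h := M 0)) r)"
proof -
  have "6 + h < W" "Suc h < W" using assms d_le W_ge2 by simp_all
  then show ?thesis using assms by (simp add: funpow_N stp_eq)
qed

lemma segBS_done: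
  assumes "M 2 = lo" "M 3 = hi" "\<not> lo < hi"
  shows "\<exists>M'. (stp ^^ 2) (34, M, out) = (51, M', out) \<and> M' 2 = lo \<and> (\<forall>r. r \<noteq> 2 \<and> r \<noteq> 3 \<and> r \<noteq> 4 \<and> r \<noteq> 5 \<longrightarrow> M' r = M r)"
  using assms by (simp add: funpow_N stp_eq)

lemma segBS_z:
  assumes "M 2 = lo" "M 3 = hi" "lo < hi" "lo + hi < W" "6 + (lo + hi) div 2 < W" "M (6 + (lo + hi) div 2) = 0"
  shows "\<exists>M'. (stp ^^ 12) (34, M, out) = (34, M', out) \<and> M' 2 = lo \<and> M' 3 = (lo + hi) div 2 \<and> (\<forall>r. r \<noteq> 2 \<and> r \<noteq> 3 \<and> r \<noteq> 4 \<and> r \<noteq> 5 \<longrightarrow> M' r = M r)"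
  using assms by (simp add: funpow_N stp_eq)

lemma segBS_le:
  assumes "M 2 = lo" "M 3 = hi" "lo < hi" "lo + hi < W" "6 + (lo + hi) div 2 < W" "M (6 + (lo + hi) div 2) \<noteq> 0"
    "1 \<le> M 0 \<and> M 0 \<le> length \<sigma> \<and> 1 \<le> M (6 + (lo + hi) div 2) \<and> M (6 + (lo + hi) div 2) \<le> length \<sigma> \<and> sval \<sigma> (M 0) \<le> sval \<sigma> (M (6 + (lo + hi) div 2))"
  shows "\<exists>M'. (stp ^^ 14) (34, M, out) = (34, M', out) \<and> M' 2 = lo \<and> M' 3 = (lo + hi) div 2 \<and> (\<forall>r. r \<noteq> 2 \<and> r \<noteq> 3 \<and> r \<noteq> 4 \<and> r \<noteq> 5 \<longrightarrow> M' r = M r)"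
  using assms by (simp add: funpow_N stp_eq)

lemma segBS_gt:
  assumes "M 2 = lo" "M 3 = hi" "lo < hi" "lo + hi < W" "6 + (lo + hi) div 2 < W" "(lo + hi) div 2 + 1 < W" "M (6 + (lo + hi) div 2) \<noteq> 0"
    "\<not> (1 \<le> M 0 \<and> M 0 \<le> length \<sigma> \<and> 1 \<le> M (6 + (lo + hi) div 2) \<and> M (6 + (lo + hi) div 2) \<le> length \<sigma> \<and> sval \<sigma> (M 0) \<le> sval \<sigma> (M (6 + (lo + hi) div 2)))"
  shows "\<exists>M'. (stp ^^ 14) (34, M, out) = (34, M', out) \<and> M' 2 = (lo + hi) div 2 + 1 \<and> M' 3 = hi \<and> (\<forall>r. r \<noteq> 2 \<and> r \<noteq> 3 \<and> r \<noteq> 4 \<and> r \<noteq> 5 \<longrightarrow> M' r = M r)"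
proof -
  have e: "(if 1 \<le> M 0 \<and> M 0 \<le> length \<sigma> \<and> 1 \<le> M (6 + (lo + hi) div 2) \<and> M (6 + (lo + hi) div 2) \<le> length \<sigma> \<and> sval \<sigma> (M 0) \<le> sval \<sigma> (M (6 + (lo + hi) div 2)) then 1 else 0) = (0::nat)"
    using assms(8) by (simp only: if_False)
  show ?thesis using assms e by (simp add: funpow_N stp_eq funpow_1' del: One_nat_def)
qed

definition goL :: "(nat \<Rightarrow> nat) \<Rightarrow> nat \<Rightarrow> bool" where
  "goL M k \<longleftrightarrow> M (6 + k) = 0 \<or> (1 \<le> M 0 \<and> M 0 \<le> length \<sigma> \<and> 1 \<le> M (6 + k) \<and> M (6 + k) \<le> length \<sigma> \<and> sval \<sigma> (M 0) \<le> sval \<sigma> (M (6 + k)))"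

lemma BS:
  assumes "hi \<le> d" "lo \<le> h" "h \<le> hi" "M 2 = lo" "M 3 = hi"
    and G: "\<forall>k<d. goL M k \<longleftrightarrow> h \<le> k"
  shows "\<exists>k M'. k \<le> 14 * bl (hi - lo) + 2 \<and> (stp ^^ k) (34, M, out) = (51, M', out) \<and> M' 2 = h
     \<and> (\<forall>r. r \<noteq> 2 \<and> r \<noteq> 3 \<and> r \<noteq> 4 \<and> r \<noteq> 5 \<longrightarrow> M' r = M r)"
  using assms
proof (induction "hi - lo" arbitrary: lo hi M rule: less_induct)
  case less
  show ?case
  proof (cases "lo < hi")
    case False
    then have "lo = h" using less.prems by simp
    then show ?thesis using segBS_done[of M lo hi out] less.prems False by fastforce
  next
    case lh: True
    let ?m = "(lo + hi) div 2"
    have m: "?m < hi" "lo \<le> ?m" "?m < d" using lh less.prems by auto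
    have W1: "lo + hi < W" "6 + ?m < W" "?m + 1 < W" using less.prems m d_le W_ge2 W_ge by auto
    have bl1: "bl (hi - lo) = Suc (bl ((hi - lo) div 2))" using lh by (simp add: bl_pos)
    have Gm: "goL M ?m \<longleftrightarrow> h \<le> ?m" using less.prems(6) m by blast
    have frame_G: "\<forall>k<d. goL M' k \<longleftrightarrow> h \<le> k" if "\<forall>r. r \<noteq> 2 \<and> r \<noteq> 3 \<and> r \<noteq> 4 \<and> r \<noteq> 5 \<longrightarrow> M' r = M r" for M'
    proof -
      have "goL M' k = goL M k" for k using that by (simp add: goL_def)
      then show ?thesis using less.prems(6) by simp
    qed
    show ?thesis
    proof (cases "goL M ?m")
      case gl: True
      then have hm: "h \<le> ?m" using Gm by simp
      obtain M1 k1 where s1: "(stp ^^ k1) (34, M, out) = (34, M1, out)" "k1 \<le> 14" "M1 2 = lo" "M1 3 = ?m"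
        and f1: "\<forall>r. r \<noteq> 2 \<and> r \<noteq> 3 \<and> r \<noteq> 4 \<and> r \<noteq> 5 \<longrightarrow> M1 r = M r"
      proof (cases "M (6 + ?m) = 0")
        case True
        then obtain M1 where "(stp ^^ 12) (34, M, out) = (34, M1, out)" "M1 2 = lo" "M1 3 = ?m"
          "\<forall>r. r \<noteq> 2 \<and> r \<noteq> 3 \<and> r \<noteq> 4 \<and> r \<noteq> 5 \<longrightarrow> M1 r = M r"
          using segBS_z[of M lo hi out] less.prems W1 lh by blast
        then show ?thesis using that[of 12 M1] by simp
      next
        case False
        then have "1 \<le> M 0 \<and> M 0 \<le> length \<sigma> \<and> 1 \<le> M (6 + ?m) \<and> M (6 + ?m) \<le> length \<sigma> \<and> sval \<sigma> (M 0) \<le> sval \<sigma> (M (6 + ?m))"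
          using gl by (simp add: goL_def)
        then obtain M1 where "(stp ^^ 14) (34, M, out) = (34, M1, out)" "M1 2 = lo" "M1 3 = ?m"
          "\<forall>r. r \<noteq> 2 \<and> r \<noteq> 3 \<and> r \<noteq> 4 \<and> r \<noteq> 5 \<longrightarrow> M1 r = M r"
          using segBS_le[of M lo hi out] less.prems W1 lh False by blast
        then show ?thesis using that[of 14 M1] by simp
      qed
      have lt: "?m - lo < hi - lo" using m by simp
      have "\<exists>k M'. k \<le> 14 * bl (?m - lo) + 2 \<and> (stp ^^ k) (34, M1, out) = (51, M', out) \<and> M' 2 = h
          \<and> (\<forall>r. r \<noteq> 2 \<and> r \<noteq> 3 \<and> r \<noteq> 4 \<and> r \<noteq> 5 \<longrightarrow> M' r = M1 r)"
        by (rule less.hyps[OF lt]) (use less.prems m hm s1 frame_G[OF f1] in auto)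
      then obtain k2 M2 where r2: "k2 \<le> 14 * bl (?m - lo) + 2" "(stp ^^ k2) (34, M1, out) = (51, M2, out)" "M2 2 = h"
          "\<forall>r. r \<noteq> 2 \<and> r \<noteq> 3 \<and> r \<noteq> 4 \<and> r \<noteq> 5 \<longrightarrow> M2 r = M1 r"
        by blast
      have "bl (?m - lo) \<le> bl ((hi - lo) div 2)" by (rule bl_mono) linarith
      then have "k1 + k2 \<le> 14 * bl (hi - lo) + 2" using r2(1) s1(2) bl1 by simp
      moreover have "(stp ^^ (k1 + k2)) (34, M, out) = (51, M2, out)" using runs_trans s1(1) r2(2) by blast
      ultimately show ?thesis using r2 f1 by (intro exI[of _ "k1 + k2"] exI[of _ M2]) auto
    next
      case gr: False
      then have hm: "?m < h" using Gm by simp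
      have ng: "M (6 + ?m) \<noteq> 0" "\<not> (1 \<le> M 0 \<and> M 0 \<le> length \<sigma> \<and> 1 \<le> M (6 + ?m) \<and> M (6 + ?m) \<le> length \<sigma> \<and> sval \<sigma> (M 0) \<le> sval \<sigma> (M (6 + ?m)))"
        using gr by (simp_all add: goL_def)
      obtain M1 where s1: "(stp ^^ 14) (34, M, out) = (34, M1, out)" "M1 2 = ?m + 1" "M1 3 = hi"
        and f1: "\<forall>r. r \<noteq> 2 \<and> r \<noteq> 3 \<and> r \<noteq> 4 \<and> r \<noteq> 5 \<longrightarrow> M1 r = M r"
        using segBS_gt[of M lo hi out] less.prems W1 lh ng by blast
      have lt: "hi - (?m + 1) < hi - lo" using m by simp
      have "\<exists>k M'. k \<le> 14 * bl (hi - (?m + 1)) + 2 \<and> (stp ^^ k) (34, M1, out) = (51, M', out) \<and> M' 2 = h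
          \<and> (\<forall>r. r \<noteq> 2 \<and> r \<noteq> 3 \<and> r \<noteq> 4 \<and> r \<noteq> 5 \<longrightarrow> M' r = M1 r)"
        by (rule less.hyps[OF lt]) (use less.prems m hm s1 frame_G[OF f1] in auto)
      then obtain k2 M2 where r2: "k2 \<le> 14 * bl (hi - (?m + 1)) + 2" "(stp ^^ k2) (34, M1, out) = (51, M2, out)" "M2 2 = h"
          "\<forall>r. r \<noteq> 2 \<and> r \<noteq> 3 \<and> r \<noteq> 4 \<and> r \<noteq> 5 \<longrightarrow> M2 r = M1 r"
        by blast
      have "bl (hi - (?m + 1)) \<le> bl ((hi - lo) div 2)" by (rule bl_mono) linarith
      then have "14 + k2 \<le> 14 * bl (hi - lo) + 2" using r2(1) bl1 by simp
      moreover have "(stp ^^ (14 + k2)) (34, M, out) = (51, M2, out)" using runs_trans s1(1) r2(2) by blast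
      ultimately show ?thesis using r2 f1 by (intro exI[of _ "14 + k2"] exI[of _ M2]) auto
    qed
  qed
qed

lemma chain:
  assumes "(stp ^^ a) c = c'" "\<exists>k M'. k \<le> B \<and> (stp ^^ k) c' = (pc, M', ou) \<and> P M'"
  shows "\<exists>k M'. k \<le> a + B \<and> (stp ^^ k) c = (pc, M', ou) \<and> P M'"
proof -
  obtain k M' where "k \<le> B" "(stp ^^ k) c' = (pc, M', ou)" "P M'" using assms(2) by blast
  then show ?thesis using runs_trans[OF assms(1)] by (intro exI[of _ "a + k"] exI[of _ M']) auto
qed

lemma slots_store:
  assumes "slots L M" "h \<le> length L" "\<forall>r\<ge>6. M' r = (M(6 + h := v)) r"
  shows "slots (if h < length L then L[h := v] else L @ [v]) M'"
  using assms unfolding slots_def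
  by (auto simp: nth_list_update nth_append split: if_splits)

lemma SR_same:
  assumes "M' 0 = Suc t" "M' 1 = Qv (Suc t)" "\<forall>r\<ge>6. M' r = M r" "slots (Wv t) M" "Wv (Suc t) = Wv t"
  shows "SR (Suc t) M'"
  using assms slots_frame unfolding SR_def by metis

lemma slot_val: "slots L M \<Longrightarrow> M (6 + k) = (if k < length L then L ! k else 0)"
  by (simp add: slots_def)

lemma it28:
  assumes t: "t < length \<sigma>" and m: "M 0 = Suc t" "M 1 = Qv t" "slots (Wv t) M"
    and ip: "i \<le> posf \<sigma> (PS \<sigma> t) (Suc t)"
  shows "\<exists>k M'. k \<le> 32 + 14 * bl d \<and> (stp ^^ k) (28, M, Ov t) = (1, M', Ov (Suc t)) \<and> SR (Suc t) M'"
proof -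
  let ?p = "posf \<sigma> (PS \<sigma> t) (Suc t)"
  let ?h = "min (?p - i) d"
  obtain M1 where s1: "(stp ^^ 6) (28, M, Ov t) = (34, M1, Ov t)" "M1 0 = M 0" "M1 1 = M 1" "M1 2 = 0" "M1 3 = d"
      "\<forall>r\<ge>6. M1 r = M r"
    using segF[of M "Ov t"] by blast
  have G: "\<forall>k<d. goL M1 k \<longleftrightarrow> ?h \<le> k"
  proof (intro allI impI)
    fix k assume k: "k < d"
    have "M1 (6 + k) = (if k < length (Wv t) then Wv t ! k else 0)" using s1(6) slot_val[OF m(3)] by simp
    then show "goL M1 k \<longleftrightarrow> ?h \<le> k" using B5[OF ip k t] s1(2) m(1) unfolding goL_def by simp
  qed
  obtain kb M2 where s2: "kb \<le> 14 * bl (d - 0) + 2" "(stp ^^ kb) (34, M1, Ov t) = (51, M2, Ov t)" "M2 2 = ?h"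
      "\<forall>r. r \<noteq> 2 \<and> r \<noteq> 3 \<and> r \<noteq> 4 \<and> r \<noteq> 5 \<longrightarrow> M2 r = M1 r"
    using BS[of d 0 ?h M1 "Ov t"] s1 G by auto
  have M2v: "M2 0 = Suc t" "M2 1 = Qv t" "\<forall>r\<ge>6. M2 r = M r" using s2(4) s1 m by auto
  have Qs: "Qv (Suc t) = Qv t" using ip by (auto simp: Qv_Suc posat_Suc)
  have rest: "\<exists>k M'. k \<le> 16 \<and> (stp ^^ k) (51, M2, Ov t) = (1, M', Ov (Suc t)) \<and> SR (Suc t) M'"
  proof (cases "?p - i < d")
    case True
    then have h: "?h = ?p - i" by simp
    obtain M3 where s3: "(stp ^^ 7) (51, M2, Ov t) = (58, M3, Ov t)" "M3 0 = M2 0" "M3 1 = M2 1" "M3 2 = ?h" "M3 4 = d"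
        "\<forall>r\<ge>6. M3 r = M2 r"
      using segG_lt[of M2 ?h "Ov t"] s2(3) True h by auto
    have b7: "?p - i \<le> length (Wv t)" "Wv (Suc t) = (if ?p - i < length (Wv t) then (Wv t)[?p - i := Suc t] else Wv t @ [Suc t])"
      using B7[OF ip True] by auto
    have sl: "slots (Wv (Suc t)) M'" if "\<forall>r\<ge>6. M' r = (M3(6 + ?h := M3 0)) r" for M'
    proof -
      have "\<forall>r\<ge>6. M' r = (M(6 + (?p - i) := Suc t)) r" using that s3 M2v h by auto
      then show ?thesis using slots_store[OF m(3) b7(1)] b7(2) by simp
    qed
    show ?thesis
    proof (cases "Suc ?h = d")
      case True
      then have pj: "?p = j - 1" using h ij ip by (simp add: d_def)
      obtain M4 where s4: "(stp ^^ 9) (58, M3, Ov t) = (1, M4, Ov t @ [M3 0])" "M4 0 = M3 0" "M4 1 = M3 1"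
          "\<forall>r\<ge>6. M4 r = (M3(6 + ?h := M3 0)) r"
        using segH_out[of M3 ?h "Ov t"] s3 True h by auto
      have "Ov t @ [M3 0] = Ov (Suc t)" using pj s3 M2v by (simp add: Ov_Suc posat_Suc)
      moreover have "SR (Suc t) M4" using s4 s3 M2v Qs sl[OF s4(4)] by (simp add: SR_def)
      ultimately show ?thesis using runs_trans[OF s3(1) s4(1)] by (intro exI[of _ 16] exI[of _ M4]) auto
    next
      case False
      then have lt: "Suc ?h < d" using True h by linarith
      have pj: "?p \<noteq> j - 1" using False h ij ip by (simp add: d_def)
      obtain M4 where s4: "(stp ^^ 8) (58, M3, Ov t) = (1, M4, Ov t)" "M4 0 = M3 0" "M4 1 = M3 1"
          "\<forall>r\<ge>6. M4 r = (M3(6 + ?h := M3 0)) r"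
        using segH_no[of M3 ?h "Ov t"] s3 lt h by auto
      have "Ov t = Ov (Suc t)" using pj by (simp add: Ov_Suc posat_Suc)
      moreover have "SR (Suc t) M4" using s4 s3 M2v Qs sl[OF s4(4)] by (simp add: SR_def)
      ultimately show ?thesis using runs_trans[OF s3(1) s4(1)] by (intro exI[of _ 15] exI[of _ M4]) auto
    qed
  next
    case False
    then have h: "?h = d" by simp
    obtain M3 where s3: "(stp ^^ 7) (51, M2, Ov t) = (1, M3, Ov t)" "M3 0 = M2 0" "M3 1 = M2 1"
        "\<forall>r\<ge>6. M3 r = M2 r"
      using segG_ge[of M2 ?h "Ov t"] s2(3) h by auto
    have pj: "?p \<noteq> j - 1" using False ij by (simp add: d_def)
    have "Ov t = Ov (Suc t)" using pj by (simp add: Ov_Suc posat_Suc)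
    moreover have "SR (Suc t) M3"
      using SR_same[of M3 t M] s3 M2v Qs m(3) B6[OF ip] False by simp
    ultimately show ?thesis using s3(1) by (intro exI[of _ 7] exI[of _ M3]) auto
  qed
  have "\<exists>k M'. k \<le> kb + 16 \<and> (stp ^^ k) (34, M1, Ov t) = (1, M', Ov (Suc t)) \<and> SR (Suc t) M'"
    by (rule chain[OF s2(2) rest])
  then have "\<exists>k M'. k \<le> 6 + (kb + 16) \<and> (stp ^^ k) (28, M, Ov t) = (1, M', Ov (Suc t)) \<and> SR (Suc t) M'"
    by (rule chain[OF s1(1)])
  then obtain k M' where "k \<le> 6 + (kb + 16)" "(stp ^^ k) (28, M, Ov t) = (1, M', Ov (Suc t))" "SR (Suc t) M'"
    by blast
  moreover have "6 + (kb + 16) \<le> 32 + 14 * bl d" using s2(1) by simp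
  ultimately show ?thesis by (intro exI[of _ k] exI[of _ M']) simp
qed

lemma weaken:
  fixes B B' :: nat and Q :: "nat \<Rightarrow> (nat \<Rightarrow> nat) \<Rightarrow> bool"
  assumes "\<exists>k M'. k \<le> B \<and> Q k M'" "B \<le> B'"
  shows "\<exists>k M'. k \<le> B' \<and> Q k M'"
proof -
  from assms(1) obtain k M' where "k \<le> B" "Q k M'" by blast
  moreover have "k \<le> B'" using \<open>k \<le> B\<close> assms(2) by (rule le_trans)
  ultimately show ?thesis by blast
qed

lemma notwin:
  assumes t: "t < length \<sigma>" and pl: "posf \<sigma> (PS \<sigma> t) (Suc t) < i"
    and m: "slots (Wv t) M" and m': "M' 0 = Suc t" "M' 1 = Qv (Suc t)" "\<forall>r\<ge>6. M' r = M r"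
  shows "SR (Suc t) M' \<and> Ov (Suc t) = Ov t"
proof -
  have "Ov (Suc t) = Ov t" using pl ij by (simp add: Ov_Suc posat_Suc)
  moreover have "SR (Suc t) M'" using SR_same[OF m' m B8[OF pl]] .
  ultimately show ?thesis by simp
qed

lemma it7:
  assumes t: "t < length \<sigma>" and m: "M 0 = Suc t" "M 1 = Qv t" "slots (Wv t) M"
  shows "\<exists>k M'. k \<le> 45 + 14 * bl d \<and> (stp ^^ k) (7, M, Ov t) = (1, M', Ov (Suc t)) \<and> SR (Suc t) M'"
proof -
  let ?p = "posf \<sigma> (PS \<sigma> t) (Suc t)"
  have x: "Suc t \<le> length \<sigma>" using t by simp
  show ?thesis
  proof (cases "Qv t < length A \<and> A ! Qv t = Suc t")
    case True
    then have ii: "0 < i" "?p = i - 1" using B1[OF t] by (auto simp: posat_Suc)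
    then have pl: "?p < i" by simp
    obtain M1 where s1: "(stp ^^ 8) (7, M, Ov t) = (1, M1, Ov t)" "M1 0 = Suc t" "M1 1 = Suc (Qv t)"
        "\<forall>r\<ge>6. M1 r = M r"
      using segB_eq[of M "Suc t" "Qv t" "Ov t"] True m x by auto
    have "Qv (Suc t) = Suc (Qv t)" using ii by (simp add: Qv_Suc posat_Suc)
    then have "SR (Suc t) M1 \<and> Ov (Suc t) = Ov t" using notwin[OF t pl m(3)] s1 by simp
    then show ?thesis using s1(1) by (intro exI[of _ 8] exI[of _ M1]) auto
  next
    case False
    then have nq: "\<not> (0 < i \<and> ?p = i - 1)" using B1[OF t] by (auto simp: posat_Suc)
    have Qs: "Qv (Suc t) = Qv t" using nq by (simp add: Qv_Suc posat_Suc)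
    obtain M1 where s1: "(stp ^^ 5) (7, M, Ov t) = (12, M1, Ov t)" "M1 0 = Suc t" "M1 1 = Qv t"
        "\<forall>r\<ge>6. M1 r = M r"
      using segB_ne[of M "Suc t" "Qv t" "Ov t"] False m x by auto
    have m1: "slots (Wv t) M1" using slots_frame[OF m(3)] s1(4) by simp
    have "\<exists>k M'. k \<le> 40 + 14 * bl d \<and> (stp ^^ k) (12, M1, Ov t) = (1, M', Ov (Suc t)) \<and> SR (Suc t) M'"
    proof (cases "Qv t = 2")
      case True
      obtain M2 where s2: "(stp ^^ 3) (12, M1, Ov t) = (21, M2, Ov t)" "M2 0 = Suc t" "M2 1 = Qv t"
          "\<forall>r\<ge>6. M2 r = M1 r"
        using segC2[of M1 "Ov t"] True s1 by auto
      have m2: "slots (Wv t) M2" using slots_frame[OF m1] s2(4) by simp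
      show ?thesis
      proof (cases "i = 0")
        case True
        obtain M3 where s3: "(stp ^^ 3) (21, M2, Ov t) = (28, M3, Ov t)" "M3 0 = Suc t" "M3 1 = Qv t"
            "\<forall>r\<ge>6. M3 r = M2 r"
          using segD0[OF True, of M2 "Ov t"] s2 by auto
        have m3: "slots (Wv t) M3" using slots_frame[OF m2] s3(4) by simp
        have "\<exists>k M'. k \<le> 32 + 14 * bl d \<and> (stp ^^ k) (28, M3, Ov t) = (1, M', Ov (Suc t)) \<and> SR (Suc t) M'"
          using it28[OF t s3(2) s3(3) m3] True by simp
        then have "\<exists>k M'. k \<le> 3 + (32 + 14 * bl d) \<and> (stp ^^ k) (21, M2, Ov t) = (1, M', Ov (Suc t)) \<and> SR (Suc t) M'"
          by (rule chain[OF s3(1)])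
        then have "\<exists>k M'. k \<le> 3 + (3 + (32 + 14 * bl d)) \<and> (stp ^^ k) (12, M1, Ov t) = (1, M', Ov (Suc t)) \<and> SR (Suc t) M'"
          by (rule chain[OF s2(1)])
        then show ?thesis by (rule weaken) simp
      next
        case False
        then have pl: "?p < i" using B2 True by simp
        obtain M3 where s3: "(stp ^^ 4) (21, M2, Ov t) = (1, M3, Ov t)" "M3 0 = Suc t" "M3 1 = Qv t"
            "\<forall>r\<ge>6. M3 r = M2 r"
          using segD1[OF False, of M2 "Ov t"] s2 by auto
        have "SR (Suc t) M3 \<and> Ov (Suc t) = Ov t" using notwin[OF t pl m2] s3 Qs by simp
        then show ?thesis using runs_trans[OF s2(1) s3(1)] by (intro exI[of _ 7] exI[of _ M3]) auto
      qed
    next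
      case False
      then have q2: "2 < Qv t" by (simp add: Qv_def)
      then have ip: "0 < i" by (simp add: Qv_def split: if_splits)
      have b3: "i - 1 < length (PS \<sigma> t)" "Qv t - 1 < length A" "A ! (Qv t - 1) = last (PS \<sigma> t ! (i - 1))"
        using B3[OF ip t q2] by auto
      have tp: "1 \<le> last (PS \<sigma> t ! (i - 1))" "last (PS \<sigma> t ! (i - 1)) \<le> length \<sigma>"
        using top_mem[OF b3(1)] t by auto
      obtain M2 where s2: "(stp ^^ 3) (12, M1, Ov t) = (15, M2, Ov t)" "M2 0 = Suc t" "M2 1 = Qv t"
          "\<forall>r\<ge>6. M2 r = M1 r"
        using segC3[of M1 "Ov t"] q2 s1 by auto
      have m2: "slots (Wv t) M2" using slots_frame[OF m1] s2(4) by simp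
      show ?thesis
      proof (cases "sval \<sigma> (last (PS \<sigma> t ! (i - 1))) < sval \<sigma> (Suc t)")
        case True
        then have ipp: "i \<le> ?p" using B4[OF ip b3(1)] by simp
        obtain M3 where s3: "(stp ^^ 5) (15, M2, Ov t) = (28, M3, Ov t)" "M3 0 = Suc t" "M3 1 = Qv t"
            "\<forall>r\<ge>6. M3 r = M2 r"
          using segE_above[of M2 "Suc t" "Qv t" "last (PS \<sigma> t ! (i - 1))" "Ov t"] s2 q2 b3 tp True x by auto
        have m3: "slots (Wv t) M3" using slots_frame[OF m2] s3(4) by simp
        have "\<exists>k M'. k \<le> 32 + 14 * bl d \<and> (stp ^^ k) (28, M3, Ov t) = (1, M', Ov (Suc t)) \<and> SR (Suc t) M'"
          using it28[OF t s3(2) s3(3) m3 ipp] .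
        then have "\<exists>k M'. k \<le> 5 + (32 + 14 * bl d) \<and> (stp ^^ k) (15, M2, Ov t) = (1, M', Ov (Suc t)) \<and> SR (Suc t) M'"
          by (rule chain[OF s3(1)])
        then have "\<exists>k M'. k \<le> 3 + (5 + (32 + 14 * bl d)) \<and> (stp ^^ k) (12, M1, Ov t) = (1, M', Ov (Suc t)) \<and> SR (Suc t) M'"
          by (rule chain[OF s2(1)])
        then show ?thesis by (rule weaken) simp
      next
        case False
        then have pl: "?p < i" using B4[OF ip b3(1)] by simp
        obtain M3 where s3: "(stp ^^ 6) (15, M2, Ov t) = (1, M3, Ov t)" "M3 0 = Suc t" "M3 1 = Qv t"
            "\<forall>r\<ge>6. M3 r = M2 r"
          using segE_not[of M2 "Suc t" "Qv t" "last (PS \<sigma> t ! (i - 1))" "Ov t"] s2 q2 b3 tp False x by auto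
        have "SR (Suc t) M3 \<and> Ov (Suc t) = Ov t" using notwin[OF t pl m2] s3 Qs by simp
        then show ?thesis using runs_trans[OF s2(1) s3(1)] by (intro exI[of _ 9] exI[of _ M3]) auto
      qed
    qed
    then have "\<exists>k M'. k \<le> 5 + (40 + 14 * bl d) \<and> (stp ^^ k) (7, M, Ov t) = (1, M', Ov (Suc t)) \<and> SR (Suc t) M'"
      by (rule chain[OF s1(1)])
    then show ?thesis by simp
  qed
qed

lemma iter:
  assumes t: "t < length \<sigma>" and sr: "SR t M"
  shows "\<exists>k M'. k \<le> 50 + 14 * bl d \<and> (stp ^^ k) (1, M, Ov t) = (1, M', Ov (Suc t)) \<and> SR (Suc t) M'"
proof -
  have m: "M 0 = t" "M 1 = Qv t" "slots (Wv t) M" using sr by (auto simp: SR_def)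
  obtain M1 where s1: "(stp ^^ 5) (1, M, Ov t) = (7, M1, Ov t)" "M1 0 = Suc t" "M1 1 = M 1" "\<forall>r\<ge>6. M1 r = M r"
    using segA[of M t "Ov t"] m(1) t by auto
  have "slots (Wv t) M1" using slots_frame[OF m(3)] s1(4) by simp
  then have "\<exists>k M'. k \<le> 45 + 14 * bl d \<and> (stp ^^ k) (7, M1, Ov t) = (1, M', Ov (Suc t)) \<and> SR (Suc t) M'"
    using it7[of t M1] t s1(2) s1(3) m(2) by simp
  then have "\<exists>k M'. k \<le> 5 + (45 + 14 * bl d) \<and> (stp ^^ k) (1, M, Ov t) = (1, M', Ov (Suc t)) \<and> SR (Suc t) M'"
    by (rule chain[OF s1(1)])
  then show ?thesis by simp
qed

lemma SR_0: "SR 0 ((\<lambda>_. 0)(1 := 2))"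
  by (simp add: SR_def Qv_def Wv_def slots_def)

lemma Ov_0: "Ov 0 = []" by (simp add: Ov_def)

lemma init_step: "stp init_config = (1, (\<lambda>_. 0)(1 := 2), [])"
  by (simp add: init_config_def stp_eq)

lemma run_all:
  "t \<le> length \<sigma> \<Longrightarrow> \<exists>k M. k \<le> 1 + t * (50 + 14 * bl d) \<and> (stp ^^ k) init_config = (1, M, Ov t) \<and> SR t M"
proof (induction t)
  case 0
  have "(stp ^^ 1) init_config = (1, (\<lambda>_. 0)(1 := 2), Ov 0)" using init_step Ov_0 by simp
  then show ?case using SR_0 by fastforce
next
  case (Suc t)
  then obtain k M where k: "k \<le> 1 + t * (50 + 14 * bl d)" "(stp ^^ k) init_config = (1, M, Ov t)" "SR t M"
    by auto
  obtain k2 M2 where k2: "k2 \<le> 50 + 14 * bl d" "(stp ^^ k2) (1, M, Ov t) = (1, M2, Ov (Suc t))" "SR (Suc t) M2"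
    using iter[OF _ k(3)] Suc.prems by auto
  have "(stp ^^ (k + k2)) init_config = (1, M2, Ov (Suc t))" using runs_trans[OF k(2) k2(2)] .
  moreover have "k + k2 \<le> 1 + Suc t * (50 + 14 * bl d)" using k(1) k2(1) by simp
  ultimately show ?case using k2(3) by blast
qed

lemma run_final:
  "\<exists>T. halted prog ((stp ^^ T) init_config) \<and> out_of ((stp ^^ T) init_config) = pile \<sigma> j
     \<and> T \<le> 6 + length \<sigma> * (50 + 14 * bl d)"
proof -
  obtain k M where k: "k \<le> 1 + length \<sigma> * (50 + 14 * bl d)" "(stp ^^ k) init_config = (1, M, Ov (length \<sigma>))"
      "SR (length \<sigma>) M"
    using run_all[of "length \<sigma>"] by auto
  obtain M' where h: "(stp ^^ 5) (1, M, Ov (length \<sigma>)) = (6, M', Ov (length \<sigma>))"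
    using segHalt[of M "Ov (length \<sigma>)"] k(3) by (auto simp: SR_def)
  have "(stp ^^ (k + 5)) init_config = (6, M', Ov (length \<sigma>))" using runs_trans[OF k(2) h] .
  then show ?thesis using k(1) halted6 pile_j
    by (intro exI[of _ "k + 5"]) (simp add: out_of_def)
qed

definition Isp :: "config \<Rightarrow> bool" where
  "Isp c \<longleftrightarrow> (case c of (pc, M, out) \<Rightarrow>
     (\<forall>r\<ge>6 + d. M r = 0) \<and> (pc = 52 \<longrightarrow> M 4 = 0) \<and> (pc = 53 \<longrightarrow> M 5 = i)
     \<and> (pc = 54 \<longrightarrow> M 5 = i \<and> M 4 = 1) \<and> (pc = 55 \<longrightarrow> M 5 = i \<and> M 4 = j)
     \<and> (pc = 56 \<longrightarrow> M 4 = d) \<and> (pc = 57 \<longrightarrow> M 4 = d \<and> (M 5 \<noteq> 0 \<longrightarrow> M 2 < d))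
     \<and> (pc = 58 \<longrightarrow> M 2 < d) \<and> (pc = 59 \<longrightarrow> M 2 < d \<and> M 5 \<le> 6) \<and> (pc = 60 \<longrightarrow> M 5 < 6 + d))"

lemma mod_small_sum: "a \<le> 6 \<Longrightarrow> b < d \<Longrightarrow> (a + b) mod W < 6 + d"
  by (meson add_le_less_mono le_less_trans mod_less_eq_dividend)

lemma mod_small_sum': "a \<le> 6 \<Longrightarrow> b < j - i \<Longrightarrow> (a + b) mod W < 6 + (j - i)"
  using mod_small_sum by (simp add: d_def)

lemma Isp_step:
  assumes "Isp (pc, M, out)"
  shows "Isp (stp (pc, M, out))"
proof (cases "pc < 68")
  case False
  then show ?thesis using assms by (simp add: stp_eq)
next
  case True
  have dj: "d = j - i" by (simp add: d_def)
  have "pc = 0 \<or> pc = 1 \<or> pc = 2 \<or> pc = 3 \<or> pc = 4 \<or> pc = 5 \<or> pc = 6 \<or> pc = 7 \<or> pc = 8 \<or> pc = 9 \<or> pc = 10 \<or> pc = 11 \<or> pc = 12 \<or> pc = 13 \<or> pc = 14 \<or> pc = 15 \<or> pc = 16 \<or> pc = 17 \<or> pc = 18 \<or> pc = 19 \<or> pc = 20 \<or> pc = 21 \<or> pc = 22 \<or> pc = 23 \<or> pc = 24 \<or> pc = 25 \<or> pc = 26 \<or> pc = 27 \<or> pc = 28 \<or> pc = 29 \<or> pc = 30 \<or> pc = 31 \<or> pc = 32 \<or> pc = 33 \<or> pc = 34 \<or> pc = 35 \<or> pc = 36 \<or> pc = 37 \<or> pc = 38 \<or> pc = 39 \<or>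 pc = 40 \<or> pc = 41 \<or> pc = 42 \<or> pc = 43 \<or> pc = 44 \<or> pc = 45 \<or> pc = 46 \<or> pc = 47 \<or> pc = 48 \<or> pc = 49 \<or> pc = 50 \<or> pc = 51 \<or> pc = 52 \<or> pc = 53 \<or> pc = 54 \<or> pc = 55 \<or> pc = 56 \<or> pc = 57 \<or> pc = 58 \<or> pc = 59 \<or> pc = 60 \<or> pc = 61 \<or> pc = 62 \<or> pc = 63 \<or> pc = 64 \<or> pc = 65 \<or> pc = 66 \<or> pc = 67" using True by presburger
  then show ?thesis using assms
    by (elim disjE) (simp_all add: Isp_def stp_eq dj mod_small_sum')
qed

lemma Isp_all: "Isp ((stp ^^ t) init_config)"
proof (induction t)
  case 0
  then show ?case by (simp add: Isp_def init_config_def)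
next
  case (Suc t)
  obtain pc M out where "(stp ^^ t) init_config = (pc, M, out)" by (cases "(stp ^^ t) init_config") auto
  then show ?case using Isp_step Suc.IH by simp
qed

lemma space_bound: "space (length \<sigma>) ((stp ^^ t) init_config) \<le> word_size (length \<sigma>) * (6 + d)"
proof -
  obtain pc M out where c: "(stp ^^ t) init_config = (pc, M, out)" by (cases "(stp ^^ t) init_config") auto
  then have "\<forall>r\<ge>6 + d. M r = 0" using Isp_all[of t] by (simp add: Isp_def)
  then have "(LEAST k. \<forall>r\<ge>k. M r = 0) \<le> 6 + d" by (rule Least_le)
  then show ?thesis using c by (simp add: space_def)
qed

abbreviation LL where "LL \<equiv> log 2 (real (length \<sigma>) + 2)"

lemma LL_ge1: "1 \<le> LL"
proof -
  have "log 2 2 \<le> LL" by (subst log_le_cancel_iff) simp_all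
  then show ?thesis by simp
qed

lemma bl_le_log: "real (bl d) \<le> 1 + LL"
proof -
  let ?n = "length \<sigma>"
  have n1: "1 \<le> ?n" by (rule n_pos)
  have ne: "\<sigma> \<noteq> []" using n1 by auto
  have "bl d \<le> bl ?n" using d_le by (rule bl_mono)
  moreover have "2 ^ bl ?n \<le> 2 * ?n" using ne by (intro bl_pow) simp
  then have "real (2 ^ bl ?n) \<le> real (2 * ?n)" by (simp only: of_nat_le_iff)
  then have "(2::real) ^ bl ?n \<le> 2 * real ?n" by simp
  then have "log 2 ((2::real) ^ bl ?n) \<le> log 2 (2 * real ?n)"
    using ne by (subst log_le_cancel_iff) simp_all
  then have "real (bl ?n) \<le> 1 + log 2 (real ?n)"
    using ne by (simp add: log_nat_power log_mult)
  moreover have "log 2 (real ?n) \<le> LL" using ne by (subst log_le_cancel_iff) simp_all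
  ultimately show ?thesis by linarith
qed

lemma time_real: "real (6 + length \<sigma> * (50 + 14 * bl d)) \<le> 100 * (real (length \<sigma>) + 1) * LL"
proof -
  let ?N = "real (length \<sigma>)"
  let ?B = "real (bl d)"
  have L1: "1 \<le> LL" by (rule LL_ge1)
  have N0: "0 \<le> ?N" by simp
  have "?N * (50 + 14 * ?B) \<le> ?N * (64 + 14 * LL)"
    using bl_le_log N0 by (intro mult_left_mono) simp_all
  also have "\<dots> \<le> ?N * (78 * LL)" using L1 N0 by (intro mult_left_mono) simp_all
  finally have a: "?N * (50 + 14 * ?B) \<le> 78 * (?N * LL)" by simp
  have P0: "0 \<le> ?N * LL" using L1 N0 by simp
  have e: "100 * (?N + 1) * LL = 100 * (?N * LL) + 100 * LL" by (simp add: algebra_simps)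
  have "6 + ?N * (50 + 14 * ?B) \<le> 100 * (?N + 1) * LL" using a L1 P0 unfolding e by linarith
  then show ?thesis by simp
qed

lemma space_real:
  "real (word_size (length \<sigma>) * (6 + d)) \<le>
     100 * (real (length (pile \<sigma> i)) + real (length (pile \<sigma> j)) + real (j - i)) * LL"
proof -
  let ?w = "word_size (length \<sigma>)"
  have L1: "1 \<le> LL" by (rule LL_ge1)
  have c1: "real_of_int \<lceil>LL\<rceil> \<le> LL + 1" by linarith
  have c0: "0 \<le> \<lceil>LL\<rceil>" using L1 by linarith
  have "real ?w = real_of_int \<lceil>LL\<rceil> + 1" using c0 by (simp add: word_size_def)
  then have w: "real ?w \<le> 3 * LL" using L1 c1 by linarith
  have d1: "1 \<le> real d" using d_pos by simp
  have "real (?w * (6 + d)) = real ?w * (6 + real d)" by simp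
  also have "\<dots> \<le> (3 * LL) * (7 * real d)" using w d1 by (intro mult_mono) simp_all
  also have "\<dots> = 21 * real d * LL" by simp
  also have "\<dots> \<le> 100 * (real (length (pile \<sigma> i)) + real (length (pile \<sigma> j)) + real (j - i)) * LL"
    using L1 by (intro mult_right_mono) (simp_all add: d_def)
  finally show ?thesis .
qed

lemma main:
  "\<exists>T. halted prog (conf prog \<sigma> ([i, j] @ pile \<sigma> i) T)
      \<and> out_of (conf prog \<sigma> ([i, j] @ pile \<sigma> i) T) = pile \<sigma> j
      \<and> real T \<le> 100 * (real (length \<sigma>) + 1) * log 2 (real (length \<sigma>) + 2)
      \<and> (\<forall>t\<le>T. real (space (length \<sigma>) (conf prog \<sigma> ([i, j] @ pile \<sigma> i) t))
            \<le> 100 * (real (length (pile \<sigma> i)) + real (length (pile \<sigma> j)) + real (j - i))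
                * log 2 (real (length \<sigma>) + 2))"
proof -
  have cf: "conf prog \<sigma> ([i, j] @ pile \<sigma> i) t = (stp ^^ t) init_config" for t
    by (simp add: conf_def A_def)
  obtain T where T: "halted prog ((stp ^^ T) init_config)" "out_of ((stp ^^ T) init_config) = pile \<sigma> j"
      "T \<le> 6 + length \<sigma> * (50 + 14 * bl d)"
    using run_final by blast
  have "real T \<le> real (6 + length \<sigma> * (50 + 14 * bl d))" using T(3) by (simp only: of_nat_le_iff)
  also have "\<dots> \<le> 100 * (real (length \<sigma>) + 1) * LL" by (rule time_real)
  finally have tm: "real T \<le> 100 * (real (length \<sigma>) + 1) * LL" .
  have sp: "real (space (length \<sigma>) ((stp ^^ t) init_config))
       \<le> 100 * (real (length (pile \<sigma> i)) + real (length (pile \<sigma> j)) + real (j - i)) * LL" for t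
  proof -
    have "real (space (length \<sigma>) ((stp ^^ t) init_config)) \<le> real (word_size (length \<sigma>) * (6 + d))"
      using space_bound[of t] by (simp only: of_nat_le_iff)
    also have "\<dots> \<le> 100 * (real (length (pile \<sigma> i)) + real (length (pile \<sigma> j)) + real (j - i)) * LL"
      by (rule space_real)
    finally show ?thesis .
  qed
  show ?thesis using T tm sp unfolding cf by blast
qed

end

theorem lemma7:
  "\<exists>(P :: instr list) (c :: real). c > 0 \<and>
     (\<forall>(\<sigma> :: int list) (i :: nat) (j :: nat).
        i < j \<and> j \<le> length (piles \<sigma>) \<longrightarrow>
        (let n = length \<sigma>; A = [i, j] @ pile \<sigma> i in
         \<exists>T. halted P (conf P \<sigma> A T)
            \<and> out_of (conf P \<sigma> A T) = pile \<sigma> j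
            \<and> real T \<le> c * (real n + 1) * log 2 (real n + 2)
            \<and> (\<forall>t\<le>T. real (space n (conf P \<sigma> A t))
                  \<le> c * (real (length (pile \<sigma> i)) + real (length (pile \<sigma> j)) + real (j - i))
                      * log 2 (real n + 2))))"
proof (intro exI[of _ prog] exI[of _ "100::real"] conjI allI impI)
  show "(0::real) < 100" by simp
next
  fix \<sigma> :: "int list" and i j :: nat
  assume a: "i < j \<and> j \<le> length (piles \<sigma>)"
  interpret sim \<sigma> i j using a by unfold_locales auto
  show "let n = length \<sigma>; A = [i, j] @ pile \<sigma> i in
         \<exists>T. halted prog (conf prog \<sigma> A T)
            \<and> out_of (conf prog \<sigma> A T) = pile \<sigma> j
            \<and> real T \<le> 100 * (real n + 1) * log 2 (real n + 2)
            \<and> (\<forall>t\<le>T. real (space n (conf prog \<sigma> A t))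
                  \<le> 100 * (real (length (pile \<sigma> i)) + real (length (pile \<sigma> j)) + real (j - i))
                      * log 2 (real n + 2))"
    unfolding Let_def by (rule main)
qed

end
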